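(* Let $M$ be a term of the language $\mathbf{PCF}^{\mathbf{list}}$ such that $x_1:\mathtt{bit},\ldots,x_n:\mathtt{bit}\vdash M:\mathtt{bit}^m$ is derivable. Suppose that $$\mathit{EmptyAM}(M)\;\to_{am}^*\;(\langle p_{i_1},\ldots,p_{i_k}\rangle,\ (I,C),\ L),$$ where $p_{i_1},\ldots,p_{i_k}$ are variables. Then $k=m$, and for every family of booleans $\vec u=(b_i)_{i\in I}$ (where $I=\{1,\ldots,n\}$) and all booleans $c_1,\ldots,c_m$: the term $T(\langle p_{i_1},\ldots,p_{i_k}\rangle,(I,C),L)(\vec u)$ is equal to $\langle c_1,\ldots,c_m\rangle$ if and only if the term $\mathtt{let}\ \langle x_1,\ldots,x_n\rangle=\langle b_1,\ldots,b_n\rangle\ \mathtt{in}\ M$ reduces (in zero or more steps of the small-step relation $\to$) to $\langle c_1,\ldots,c_m\rangle$.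
   Context: **Language $\mathbf{PCF}^{\mathbf{list}}$.** Terms: $M,N,P::= x \mid \lambda x.M \mid MN \mid \langle M,N\rangle \mid \pi_1(M)\mid\pi_2(M)\mid \mathtt{skip}\mid \mathtt{let}\ \mathtt{skip}=M\ \mathtt{in}\ N \mid \mathtt{tt}\mid\mathtt{ff}\mid \mathtt{if}\ M\ \mathtt{then}\ N\ \mathtt{else}\ P \mid \mathtt{and}\mid\mathtt{xor}\mid\mathtt{not}\mid \mathtt{inj}_1(M)\mid\mathtt{inj}_2(M)\mid \mathtt{match}\ P\ \mathtt{with}\ (x\mapsto M\mid y\mapsto N)\mid \mathtt{split}\mid Y(M)\mid \mathtt{Err}$. Types: $A,B::=\mathtt{bit}\mid A\oplus B\mid A\times B\mid \mathbf 1\mid A\to B\mid [A]$. Typing rules (context $\Delta$): $\Delta,x:A\vdash x:A$; $\mathtt{tt},\mathtt{ff}:\mathtt{bit}$; $\mathtt{skip}:\mathbf 1$; $\mathtt{Err}:A$ for any $A$; $\mathtt{not}:\mathtt{bit}\to\mathtt{bit}$; $\mathtt{and},\mathtt{xor}:\mathtt{bit}\times\mathtt{bit}\to\mathtt{bit}$; $\mathtt{split}:[A]\to\mathbf 1\oplus(A\times[A])$; the usual rules for $\lambda$, application, pairs, projections, injections, $\mathtt{let}\ \mathtt{skip}$ (first argument of type $\mathbf 1$), and $\mathtt{match}$ (on $P:A\oplus B$, branches typed with $x:A$ resp. $y:B$); if $\Delta\vdash M:\mathbf 1\oplus(A\times[A])$ then $\Delta\vdash M:[A]$; if $\Delta\vdash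 M:A\to A$ then $\Delta\vdash Y(M):A$; $\mathtt{if}\ P\ \mathtt{then}\ M\ \mathtt{else}\ N : C$ when $P:\mathtt{bit}$, $M,N:C$ and $C$ is first-order, i.e. generated by $C::=\mathtt{bit}\mid C\times C\mid [C]$. Notation: $\mathtt{nil}=\mathtt{inj}_1(\mathtt{skip})$, $M::N=\mathtt{inj}_2\langle M,N\rangle$, $[M_1,\ldots,M_n]=M_1::(\cdots::(M_n::\mathtt{nil}))$, $\langle M_1,\ldots,M_n\rangle=\langle M_1,\langle\ldots,M_n\rangle\rangle$ with the corresponding $n$-ary projections $\pi_i$; $\mathtt{bit}^m$ is the $m$-fold (right-nested) product of $\mathtt{bit}$; $\mathtt{let}\ x=N\ \mathtt{in}\ M$ is $(\lambda x.M)N$; $\mathtt{let}\ \langle x_1,\ldots,x_n\rangle=N\ \mathtt{in}\ M$ is $\mathtt{let}\ z=N\ \mathtt{in}\ \mathtt{let}\ x_1=\pi_1(z)\ \mathtt{in}\cdots\mathtt{let}\ x_n=\pi_n(z)\ \mathtt{in}\ M$ with $z$ fresh. **Small-step semantics $\to$:** the smallest relation closed under arbitrary subterm contexts containing $(\lambda x.M)N\to M[N/x]$; $\pi_i\langle M_1,M_2\rangle\to M_i$; $\mathtt{let}\ \mathtt{skip}=\mathtt{skip}\ \mathtt{in}\ M\to M$; $\mathtt{if}\ \mathtt{tt}\ \mathtt{then}\ M\ \mathtt{else}\ N\to M$; $\mathtt{if}\ \mathtt{ff}\ \mathtt{then}\ M\ \mathtt{else}\ N\to N$; $\mathtt{split}\,M\to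 M$; $\mathtt{match}\ \mathtt{inj}_i(P)\ \mathtt{with}\ (x_1\mapsto M_1\mid x_2\mapsto M_2)\to M_i[P/x_i]$; $Y(M)\to M(Y(M))$; and the evident rules computing $\mathtt{not},\mathtt{and},\mathtt{xor}$ on the constants $\mathtt{tt},\mathtt{ff}$ (e.g. $\mathtt{not}\ \mathtt{tt}\to\mathtt{ff}$). $\mathtt{Err}$ does not reduce. **Reversible circuits.** A gate is $\mathrm{cnot}_i(b_1^{j_1}\ldots b_r^{j_r})$ with $i,j_1,\ldots,j_r$ natural numbers, $i\neq j_k$, $b_k$ booleans (written $\mathrm{not}_i$ if $r=0$); its wires are $\{i,j_1,\ldots,j_r\}$; $\mathrm{wires}(C)$ is the union of the wires of the gates of a list $C$. A circuit is $(I,C,O)$ with $C$ a list of gates and $I,O$ sets of wires. Executing gate $\mathrm{cnot}_i(b_1^{j_1}\ldots b_r^{j_r})$ on a valuation $v$ (a boolean per wire) gives $w$ with $w_l=v_l$ for $l\neq i$ and $w_i=v_i\ \mathtt{xor}\ \bigwedge_{k}(v_{j_k}\ \mathtt{xor}\ b_k\ \mathtt{xor}\ \mathtt{tt})$ (and $w_i=\mathtt{not}(v_i)$ if $r=0$). Executing $(I,C,O)$ on inputs $(x_i)_{i\in I}$: initialize $v_k=x_k$ for $k\in I$ and $v_k=\mathtt{ff}$ for all other wires, execute the gates of $C$ in reverse list order, and return $(v_k)_{k\in O}$. **Abstract machines.** A circuit-generating abstract machine is a triple $(M,(I,C),L)$ where $p_1:\mathtt{bit},\ldots,p_{n+k}:\mathtt{bit}\vdash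 M:\mathtt{bit}^m$, $I=\{1,\ldots,n\}$, $C$ is a list of gates, and $L$ is a one-to-one map from the free variables of $M$ onto wires in $\mathrm{wires}(C)\cup I$. For $x_1:\mathtt{bit},\ldots,x_n:\mathtt{bit}\vdash M:\mathtt{bit}^m$, $\mathit{EmptyAM}(M)=(M,(\{1,\ldots,n\},[\,]),\{x_i\mapsto i\})$. A first-order extension of $L$ is a term built from variables of the domain of $L$ by tuples $\langle\ldots\rangle$ and list literals $[\ldots]$; two such have the same shape if both are tuples of the same size or both lists of the same length with componentwise same shape (variables having the same shape). Beta-contexts $E[-]$ are one-hole contexts whose hole may be in any immediate subterm position of any term constructor (under $\lambda$, either side of application, pairs, projections, $\mathtt{let}\ \mathtt{skip}$, any of the three arguments of $\mathtt{if}$, injections, any of the three parts of $\mathtt{match}$, $Y$). The relation $\to_{am}$ is: $(E[R],RC,L)\to_{am}(E[R'],RC,L)$ for each of the rules $(\lambda x.M)N\mapsto M[N/x]$, $\pi_i\langle M_1,M_2\rangle\mapsto M_i$, $\mathtt{let}\ \mathtt{skip}=\mathtt{skip}\ \mathtt{in}\ M\mapsto M$, $\mathtt{split}\,M\mapsto M$, $\mathtt{match}\ \mathtt{inj}_i(P)\ldots\mapsto M_i[P/x_i]$, $Y(M)\mapsto M(Y(M))$; and the boolean rules, where $i_0$ is a new wire, $p_{i_0}$ a fresh variable, $L'=L\cup\{p_{i_0}\mapsto i_0\}$, and $G::(I,C)$ means $(I,G::C)$: $(E[\mathtt{ff}],RC,L)\to_{am}(E[p_{i_0}],RC,L')$;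 $(E[\mathtt{tt}],RC,L)\to_{am}(E[p_{i_0}],\mathrm{not}_{i_0}::RC,L')$; $(E[\mathtt{not}\ p_i],RC,L)\to_{am}(E[p_{i_0}],\mathrm{cnot}_{i_0}(\mathtt{ff}^{L(p_i)})::RC,L')$; $(E[\mathtt{and}\ p_i\ p_j],RC,L)\to_{am}(E[p_{i_0}],\mathrm{cnot}_{i_0}(\mathtt{tt}^{L(p_i)}\mathtt{tt}^{L(p_j)})::RC,L')$; $(E[\mathtt{xor}\ p_i\ p_j],RC,L)\to_{am}(E[p_{i_0}],\mathrm{cnot}_{i_0}(\mathtt{tt}^{L(p_i)})::\mathrm{cnot}_{i_0}(\mathtt{tt}^{L(p_j)})::RC,L')$; and for first-order extensions $V,W$ of $L$: if $V,W$ have the same shape, $(E[\mathtt{if}\ p_i\ \mathtt{then}\ V\ \mathtt{else}\ W],RC,L)\to_{am}(E[U],RC',L'')$ where $U$ has the same shape, its variables $u_1,\ldots,u_r$ are fresh, pairwise distinct and mapped by $L''\supseteq L$ to new distinct wires, and, writing $v_1,\ldots,v_r$ and $w_1,\ldots,w_r$ for the corresponding variables of $V$ and $W$, $RC'$ is $RC$ with the gates $\mathrm{cnot}_{u_j}(\mathtt{tt}^{p_i}\mathtt{tt}^{v_j})$ and $\mathrm{cnot}_{u_j}(\mathtt{ff}^{p_i}\mathtt{tt}^{w_j})$ added (variables standing for their wires); otherwise it steps to $E[\mathtt{Err}]$. **Readback.** For a machine $(M,(I,C),L)$ and $\vec u=(u_i)_{i\in I}$, let $v$ be the final valuation of executing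 the circuit $(I,C,\mathrm{Range}(L))$ on $\vec u$; $T(M,(I,C),L)(\vec u)$ is $M$ with each free variable $x$ replaced by the boolean constant $v_{L(x)}$. *)

theory Defs
  imports Main
begin

datatype ty = Bit | Sum ty ty | Prod ty ty | Unit | Arr ty ty | List ty

inductive first_order :: "ty \<Rightarrow> bool" where
  "first_order Bit"
| "first_order A \<Longrightarrow> first_order B \<Longrightarrow> first_order (Prod A B)"
| "first_order A \<Longrightarrow> first_order (List A)"

text \<open>Terms: bound variables are de Bruijn indices (TVar), free variables are
  named by natural numbers (TFV).  TLam binds index 0 in its body; TMatch P M N binds
  index 0 in M and in N.\<close>
datatype trm =
    TVar nat | TFV nat | TLam trm | TApp trm trm | TPair trm trm | TFst trm | TSnd trm
  | TSkip | TLetSkip trm trm | Tt | Ff | TIf trm trm trm | TAnd | TXor | TNot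
  | TInj1 trm | TInj2 trm | TMatch trm trm trm | TSplit | TY trm | TErr

fun lift :: "nat \<Rightarrow> trm \<Rightarrow> trm" where
  "lift c (TVar k) = (if k < c then TVar k else TVar (Suc k))"
| "lift c (TFV x) = TFV x"
| "lift c (TLam M) = TLam (lift (Suc c) M)"
| "lift c (TApp M N) = TApp (lift c M) (lift c N)"
| "lift c (TPair M N) = TPair (lift c M) (lift c N)"
| "lift c (TFst M) = TFst (lift c M)"
| "lift c (TSnd M) = TSnd (lift c M)"
| "lift c TSkip = TSkip"
| "lift c (TLetSkip M N) = TLetSkip (lift c M) (lift c N)"
| "lift c Tt = Tt"
| "lift c Ff = Ff"
| "lift c (TIf P M N) = TIf (lift c P) (lift c M) (lift c N)"
| "lift c TAnd = TAnd"
| "lift c TXor = TXor"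
| "lift c TNot = TNot"
| "lift c (TInj1 M) = TInj1 (lift c M)"
| "lift c (TInj2 M) = TInj2 (lift c M)"
| "lift c (TMatch P M N) = TMatch (lift c P) (lift (Suc c) M) (lift (Suc c) N)"
| "lift c TSplit = TSplit"
| "lift c (TY M) = TY (lift c M)"
| "lift c TErr = TErr"

fun subst :: "trm \<Rightarrow> nat \<Rightarrow> trm \<Rightarrow> trm" where
  "subst (TVar i) k s = (if k < i then TVar (i - 1) else if i = k then s else TVar i)"
| "subst (TFV x) k s = TFV x"
| "subst (TLam M) k s = TLam (subst M (Suc k) (lift 0 s))"
| "subst (TApp M N) k s = TApp (subst M k s) (subst N k s)"
| "subst (TPair M N) k s = TPair (subst M k s) (subst N k s)"
| "subst (TFst M) k s = TFst (subst M k s)"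
| "subst (TSnd M) k s = TSnd (subst M k s)"
| "subst TSkip k s = TSkip"
| "subst (TLetSkip M N) k s = TLetSkip (subst M k s) (subst N k s)"
| "subst Tt k s = Tt"
| "subst Ff k s = Ff"
| "subst (TIf P M N) k s = TIf (subst P k s) (subst M k s) (subst N k s)"
| "subst TAnd k s = TAnd"
| "subst TXor k s = TXor"
| "subst TNot k s = TNot"
| "subst (TInj1 M) k s = TInj1 (subst M k s)"
| "subst (TInj2 M) k s = TInj2 (subst M k s)"
| "subst (TMatch P M N) k s =
     TMatch (subst P k s) (subst M (Suc k) (lift 0 s)) (subst N (Suc k) (lift 0 s))"
| "subst TSplit k s = TSplit"
| "subst (TY M) k s = TY (subst M k s)"
| "subst TErr k s = TErr"

text \<open>Abstraction of the named free variable x (turning a named binder into de Bruijn).\<close>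
fun close :: "nat \<Rightarrow> nat \<Rightarrow> trm \<Rightarrow> trm" where
  "close x d (TVar k) = (if k < d then TVar k else TVar (Suc k))"
| "close x d (TFV y) = (if y = x then TVar d else TFV y)"
| "close x d (TLam M) = TLam (close x (Suc d) M)"
| "close x d (TApp M N) = TApp (close x d M) (close x d N)"
| "close x d (TPair M N) = TPair (close x d M) (close x d N)"
| "close x d (TFst M) = TFst (close x d M)"
| "close x d (TSnd M) = TSnd (close x d M)"
| "close x d TSkip = TSkip"
| "close x d (TLetSkip M N) = TLetSkip (close x d M) (close x d N)"
| "close x d Tt = Tt"
| "close x d Ff = Ff"
| "close x d (TIf P M N) = TIf (close x d P) (close x d M) (close x d N)"
| "close x d TAnd = TAnd"
| "close x d TXor = TXor"
| "close x d TNot = TNot"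
| "close x d (TInj1 M) = TInj1 (close x d M)"
| "close x d (TInj2 M) = TInj2 (close x d M)"
| "close x d (TMatch P M N) = TMatch (close x d P) (close x (Suc d) M) (close x (Suc d) N)"
| "close x d TSplit = TSplit"
| "close x d (TY M) = TY (close x d M)"
| "close x d TErr = TErr"

fun subst_fv :: "(nat \<Rightarrow> trm) \<Rightarrow> trm \<Rightarrow> trm" where
  "subst_fv f (TVar k) = TVar k"
| "subst_fv f (TFV y) = f y"
| "subst_fv f (TLam M) = TLam (subst_fv f M)"
| "subst_fv f (TApp M N) = TApp (subst_fv f M) (subst_fv f N)"
| "subst_fv f (TPair M N) = TPair (subst_fv f M) (subst_fv f N)"
| "subst_fv f (TFst M) = TFst (subst_fv f M)"
| "subst_fv f (TSnd M) = TSnd (subst_fv f M)"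
| "subst_fv f TSkip = TSkip"
| "subst_fv f (TLetSkip M N) = TLetSkip (subst_fv f M) (subst_fv f N)"
| "subst_fv f Tt = Tt"
| "subst_fv f Ff = Ff"
| "subst_fv f (TIf P M N) = TIf (subst_fv f P) (subst_fv f M) (subst_fv f N)"
| "subst_fv f TAnd = TAnd"
| "subst_fv f TXor = TXor"
| "subst_fv f TNot = TNot"
| "subst_fv f (TInj1 M) = TInj1 (subst_fv f M)"
| "subst_fv f (TInj2 M) = TInj2 (subst_fv f M)"
| "subst_fv f (TMatch P M N) = TMatch (subst_fv f P) (subst_fv f M) (subst_fv f N)"
| "subst_fv f TSplit = TSplit"
| "subst_fv f (TY M) = TY (subst_fv f M)"
| "subst_fv f TErr = TErr"

definition bconst :: "bool \<Rightarrow> trm" where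
  "bconst b = (if b then Tt else Ff)"

fun tuple :: "trm list \<Rightarrow> trm" where
  "tuple [] = TSkip"
| "tuple [M] = M"
| "tuple (M # Ms) = TPair M (tuple Ms)"

fun bitpow :: "nat \<Rightarrow> ty" where
  "bitpow 0 = Unit"
| "bitpow (Suc 0) = Bit"
| "bitpow (Suc (Suc k)) = Prod Bit (bitpow (Suc k))"

text \<open>i-th projection (1 \<le> i \<le> n) out of a right-nested n-tuple.\<close>
definition proj :: "nat \<Rightarrow> nat \<Rightarrow> trm \<Rightarrow> trm" where
  "proj n i z = (if i = n then (TSnd ^^ (n - 1)) z else TFst ((TSnd ^^ (i - 1)) z))"

definition mklet :: "nat \<Rightarrow> trm \<Rightarrow> trm \<Rightarrow> trm" where
  "mklet x N M = TApp (TLam (close x 0 M)) N"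

text \<open>let <x_1,...,x_n> = <b_1,...,b_n> in M, with x_i the free variable named i
  and the auxiliary fresh variable z named 0.\<close>
definition let_tuple :: "nat \<Rightarrow> bool list \<Rightarrow> trm \<Rightarrow> trm" where
  "let_tuple n bs M =
     mklet 0 (tuple (map bconst bs))
       (foldr (\<lambda>i acc. mklet i (proj n i (TFV 0)) acc) [1..<Suc n] M)"

inductive typing :: "(nat \<Rightarrow> ty option) \<Rightarrow> ty list \<Rightarrow> trm \<Rightarrow> ty \<Rightarrow> bool" where
  t_fv: "D x = Some A \<Longrightarrow> typing D G (TFV x) A"
| t_var: "i < length G \<Longrightarrow> typing D G (TVar i) (G ! i)"
| t_lam: "typing D (A # G) M B \<Longrightarrow> typing D G (TLam M) (Arr A B)"
| t_app: "typing D G M (Arr A B) \<Longrightarrow> typing D G N A \<Longrightarrow> typing D G (TApp M N) B"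
| t_pair: "typing D G M A \<Longrightarrow> typing D G N B \<Longrightarrow> typing D G (TPair M N) (Prod A B)"
| t_fst: "typing D G M (Prod A B) \<Longrightarrow> typing D G (TFst M) A"
| t_snd: "typing D G M (Prod A B) \<Longrightarrow> typing D G (TSnd M) B"
| t_skip: "typing D G TSkip Unit"
| t_letskip: "typing D G M Unit \<Longrightarrow> typing D G N C \<Longrightarrow> typing D G (TLetSkip M N) C"
| t_tt: "typing D G Tt Bit"
| t_ff: "typing D G Ff Bit"
| t_if: "typing D G P Bit \<Longrightarrow> typing D G M C \<Longrightarrow> typing D G N C \<Longrightarrow> first_order C
         \<Longrightarrow> typing D G (TIf P M N) C"
| t_and: "typing D G TAnd (Arr (Prod Bit Bit) Bit)"
| t_xor: "typing D G TXor (Arr (Prod Bit Bit) Bit)"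
| t_not: "typing D G TNot (Arr Bit Bit)"
| t_inj1: "typing D G M A \<Longrightarrow> typing D G (TInj1 M) (Sum A B)"
| t_inj2: "typing D G M B \<Longrightarrow> typing D G (TInj2 M) (Sum A B)"
| t_match: "typing D G P (Sum A B) \<Longrightarrow> typing D (A # G) M C \<Longrightarrow> typing D (B # G) N C
         \<Longrightarrow> typing D G (TMatch P M N) C"
| t_split: "typing D G TSplit (Arr (List A) (Sum Unit (Prod A (List A))))"
| t_fold: "typing D G M (Sum Unit (Prod A (List A))) \<Longrightarrow> typing D G M (List A)"
| t_Y: "typing D G M (Arr A A) \<Longrightarrow> typing D G (TY M) A"
| t_err: "typing D G TErr A"

text \<open>The context x_1:bit,...,x_n:bit, where x_i is the free variable named i.\<close>
definition bit_ctx :: "nat \<Rightarrow> nat \<Rightarrow> ty option" where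
  "bit_ctx n x = (if 1 \<le> x \<and> x \<le> n then Some Bit else None)"

datatype ctx =
    Hole | CLam ctx | CAppL ctx trm | CAppR trm ctx | CPairL ctx trm | CPairR trm ctx
  | CFst ctx | CSnd ctx | CLetL ctx trm | CLetR trm ctx
  | CIf1 ctx trm trm | CIf2 trm ctx trm | CIf3 trm trm ctx | CInj1 ctx | CInj2 ctx
  | CMatch1 ctx trm trm | CMatch2 trm ctx trm | CMatch3 trm trm ctx | CY ctx

fun plug :: "ctx \<Rightarrow> trm \<Rightarrow> trm" where
  "plug Hole R = R"
| "plug (CLam E) R = TLam (plug E R)"
| "plug (CAppL E N) R = TApp (plug E R) N"
| "plug (CAppR M E) R = TApp M (plug E R)"
| "plug (CPairL E N) R = TPair (plug E R) N"
| "plug (CPairR M E) R = TPair M (plug E R)"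
| "plug (CFst E) R = TFst (plug E R)"
| "plug (CSnd E) R = TSnd (plug E R)"
| "plug (CLetL E N) R = TLetSkip (plug E R) N"
| "plug (CLetR M E) R = TLetSkip M (plug E R)"
| "plug (CIf1 E M N) R = TIf (plug E R) M N"
| "plug (CIf2 P E N) R = TIf P (plug E R) N"
| "plug (CIf3 P M E) R = TIf P M (plug E R)"
| "plug (CInj1 E) R = TInj1 (plug E R)"
| "plug (CInj2 E) R = TInj2 (plug E R)"
| "plug (CMatch1 E M N) R = TMatch (plug E R) M N"
| "plug (CMatch2 P E N) R = TMatch P (plug E R) N"
| "plug (CMatch3 P M E) R = TMatch P M (plug E R)"
| "plug (CY E) R = TY (plug E R)"

text \<open>Rules shared by the small-step semantics and the abstract machine.\<close>
inductive base_red :: "trm \<Rightarrow> trm \<Rightarrow> bool" where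
  "base_red (TApp (TLam M) N) (subst M 0 N)"
| "base_red (TFst (TPair M1 M2)) M1"
| "base_red (TSnd (TPair M1 M2)) M2"
| "base_red (TLetSkip TSkip M) M"
| "base_red (TApp TSplit M) M"
| "base_red (TMatch (TInj1 P) M1 M2) (subst M1 0 P)"
| "base_red (TMatch (TInj2 P) M1 M2) (subst M2 0 P)"
| "base_red (TY M) (TApp M (TY M))"

inductive bool_red :: "trm \<Rightarrow> trm \<Rightarrow> bool" where
  "bool_red (TIf Tt M N) M"
| "bool_red (TIf Ff M N) N"
| "bool_red (TApp TNot (bconst a)) (bconst (\<not> a))"
| "bool_red (TApp TAnd (TPair (bconst a) (bconst b))) (bconst (a \<and> b))"
| "bool_red (TApp TXor (TPair (bconst a) (bconst b))) (bconst (a \<noteq> b))"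

inductive step :: "trm \<Rightarrow> trm \<Rightarrow> bool" where
  "base_red R R' \<or> bool_red R R' \<Longrightarrow> step (plug E R) (plug E R')"

section \<open>Reversible circuits\<close>

text \<open>Cnot i [(b_1,j_1),...,(b_r,j_r)] is the gate cnot_i(b_1^{j_1} ... b_r^{j_r});
  not_i is Cnot i [].\<close>
datatype gate = Cnot nat "(bool \<times> nat) list"

fun gate_wires :: "gate \<Rightarrow> nat set" where
  "gate_wires (Cnot i cs) = insert i (snd ` set cs)"

definition wires :: "gate list \<Rightarrow> nat set" where
  "wires C = (\<Union>g\<in>set C. gate_wires g)"

text \<open>xor on booleans is \<noteq>.\<close>
fun exec_gate :: "gate \<Rightarrow> (nat \<Rightarrow> bool) \<Rightarrow> (nat \<Rightarrow> bool)" where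
  "exec_gate (Cnot i cs) v =
     v(i := (v i \<noteq> (\<forall>(b, j) \<in> set cs. ((v j \<noteq> b) \<noteq> True))))"

text \<open>Final valuation: initialise inputs from u, other wires to ff, and execute the
  gates in reverse list order.\<close>
definition run_circuit :: "nat set \<Rightarrow> gate list \<Rightarrow> (nat \<Rightarrow> bool) \<Rightarrow> (nat \<Rightarrow> bool)" where
  "run_circuit I C u = foldr exec_gate C (\<lambda>k. if k \<in> I then u k else False)"

section \<open>Abstract machine\<close>

type_synonym amstate = "trm \<times> (nat set \<times> gate list) \<times> (nat \<Rightarrow> nat option)"

definition EmptyAM :: "nat \<Rightarrow> trm \<Rightarrow> amstate" where
  "EmptyAM n M = (M, ({1..n}, []), (\<lambda>x. if x \<in> {1..n} then Some x else None))"

definition new_wire :: "nat set \<Rightarrow> gate list \<Rightarrow> (nat \<Rightarrow> nat option) \<Rightarrow> nat \<Rightarrow> bool" where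
  "new_wire I C L w \<longleftrightarrow> w \<notin> I \<and> w \<notin> wires C \<and> w \<notin> ran L"

fun fvars :: "trm \<Rightarrow> nat list" where
  "fvars (TVar k) = []"
| "fvars (TFV y) = [y]"
| "fvars (TLam M) = fvars M"
| "fvars (TApp M N) = fvars M @ fvars N"
| "fvars (TPair M N) = fvars M @ fvars N"
| "fvars (TFst M) = fvars M"
| "fvars (TSnd M) = fvars M"
| "fvars TSkip = []"
| "fvars (TLetSkip M N) = fvars M @ fvars N"
| "fvars Tt = []"
| "fvars Ff = []"
| "fvars (TIf P M N) = fvars P @ fvars M @ fvars N"
| "fvars TAnd = []"
| "fvars TXor = []"
| "fvars TNot = []"
| "fvars (TInj1 M) = fvars M"
| "fvars (TInj2 M) = fvars M"
| "fvars (TMatch P M N) = fvars P @ fvars M @ fvars N"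
| "fvars TSplit = []"
| "fvars (TY M) = fvars M"
| "fvars TErr = []"

text \<open>Terms built from free variables by tuples and list literals
  (nil = inj1 skip, V :: W = inj2 <V, W>).\<close>
inductive fo_term :: "trm \<Rightarrow> bool" and fo_list :: "trm \<Rightarrow> bool" where
  "fo_term (TFV x)"
| "fo_term V \<Longrightarrow> fo_term W \<Longrightarrow> fo_term (TPair V W)"
| "fo_list V \<Longrightarrow> fo_term V"
| "fo_list (TInj1 TSkip)"
| "fo_term V \<Longrightarrow> fo_list W \<Longrightarrow> fo_list (TInj2 (TPair V W))"

definition fo_ext :: "(nat \<Rightarrow> nat option) \<Rightarrow> trm \<Rightarrow> bool" where
  "fo_ext L V \<longleftrightarrow> fo_term V \<and> set (fvars V) \<subseteq> dom L"

definition shape :: "trm \<Rightarrow> trm" where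
  "shape V = subst_fv (\<lambda>_. TFV 0) V"

definition same_shape :: "trm \<Rightarrow> trm \<Rightarrow> bool" where
  "same_shape V W \<longleftrightarrow> shape V = shape W"

text \<open>Gates added by the if-rule: for each triple (u_j, v_j, w_j) of wires,
  cnot_{u_j}(tt^{p} tt^{v_j}) and cnot_{u_j}(ff^{p} tt^{w_j}).\<close>
definition if_gates :: "nat \<Rightarrow> (nat \<times> nat \<times> nat) list \<Rightarrow> gate list" where
  "if_gates p uvw = concat (map (\<lambda>(u, v, w). [Cnot u [(True, p), (True, v)],
                                              Cnot u [(False, p), (True, w)]]) uvw)"

inductive am_step :: "amstate \<Rightarrow> amstate \<Rightarrow> bool" where
  am_base: "base_red R R' \<Longrightarrow> am_step (plug E R, RC, L) (plug E R', RC, L)"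
| am_ff: "new_wire I C L w \<Longrightarrow> L p = None \<Longrightarrow>
    am_step (plug E Ff, (I, C), L) (plug E (TFV p), (I, C), L(p \<mapsto> w))"
| am_tt: "new_wire I C L w \<Longrightarrow> L p = None \<Longrightarrow>
    am_step (plug E Tt, (I, C), L) (plug E (TFV p), (I, Cnot w [] # C), L(p \<mapsto> w))"
| am_not: "new_wire I C L w \<Longrightarrow> L p = None \<Longrightarrow> L x = Some wx \<Longrightarrow>
    am_step (plug E (TApp TNot (TFV x)), (I, C), L)
            (plug E (TFV p), (I, Cnot w [(False, wx)] # C), L(p \<mapsto> w))"
| am_and: "new_wire I C L w \<Longrightarrow> L p = None \<Longrightarrow> L x = Some wx \<Longrightarrow> L y = Some wy \<Longrightarrow>
    am_step (plug E (TApp TAnd (TPair (TFV x) (TFV y))), (I, C), L)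
            (plug E (TFV p), (I, Cnot w [(True, wx), (True, wy)] # C), L(p \<mapsto> w))"
| am_xor: "new_wire I C L w \<Longrightarrow> L p = None \<Longrightarrow> L x = Some wx \<Longrightarrow> L y = Some wy \<Longrightarrow>
    am_step (plug E (TApp TXor (TPair (TFV x) (TFV y))), (I, C), L)
            (plug E (TFV p), (I, Cnot w [(True, wx)] # Cnot w [(True, wy)] # C), L(p \<mapsto> w))"
| am_if: "L p = Some wp \<Longrightarrow> fo_ext L V \<Longrightarrow> fo_ext L W \<Longrightarrow> same_shape V W \<Longrightarrow>
    fo_term U \<Longrightarrow> same_shape U V \<Longrightarrow> distinct (fvars U) \<Longrightarrow>
    (\<forall>u \<in> set (fvars U). L u = None) \<Longrightarrow>
    length ws = length (fvars U) \<Longrightarrow> distinct ws \<Longrightarrow> (\<forall>w \<in> set ws. new_wire I C L w) \<Longrightarrow>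
    am_step (plug E (TIf (TFV p) V W), (I, C), L)
            (plug E U,
             (I, if_gates wp (zip ws (zip (map (the \<circ> L) (fvars V)) (map (the \<circ> L) (fvars W)))) @ C),
             L ++ map_of (zip (fvars U) ws))"
| am_err: "L p \<noteq> None \<Longrightarrow> fo_ext L V \<Longrightarrow> fo_ext L W \<Longrightarrow> \<not> same_shape V W \<Longrightarrow>
    am_step (plug E (TIf (TFV p) V W), RC, L) (plug E TErr, RC, L)"

definition readback :: "trm \<Rightarrow> nat set \<Rightarrow> gate list \<Rightarrow> (nat \<Rightarrow> nat option) \<Rightarrow>
    (nat \<Rightarrow> bool) \<Rightarrow> trm" where
  "readback M I C L u =
     (let v = run_circuit I C u
      in subst_fv (\<lambda>x. case L x of Some w \<Rightarrow> bconst (v w) | None \<Rightarrow> TFV x) M)"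

end

theory Submission
  imports Defs
begin

lemma lift_lift: "i < k + 1 \<Longrightarrow> lift (Suc k) (lift i t) = lift i (lift k t)"
  by (induct t arbitrary: i k) auto

lemma lift_subst [simp]: "j < i + 1 \<Longrightarrow> lift i (subst t j s) = subst (lift (i + 1) t) j (lift i s)"
  by (induct t arbitrary: i j s) (simp_all add: diff_Suc lift_lift split: nat.split)

lemma lift_subst_lt: "i < j + 1 \<Longrightarrow> lift i (subst t j s) = subst (lift i t) (j + 1) (lift i s)"
  by (induct t arbitrary: i j s) (auto simp: lift_lift)

lemma subst_lift [simp]: "subst (lift k t) k s = t"
  by (induct t arbitrary: k s) simp_all

lemma subst_subst: "i < j + 1 \<Longrightarrow> subst (subst t (Suc j) (lift i v)) i (subst u j v) = subst (subst t i u) j v"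
  by (induct t arbitrary: i j u v) (simp_all add: diff_Suc lift_lift [symmetric] lift_subst_lt split: nat.split)


fun comp :: "ctx \<Rightarrow> ctx \<Rightarrow> ctx" where
  "comp Hole F = F"
| "comp (CLam E) F = CLam (comp E F)"
| "comp (CAppL E N) F = CAppL (comp E F) N"
| "comp (CAppR M E) F = CAppR M (comp E F)"
| "comp (CPairL E N) F = CPairL (comp E F) N"
| "comp (CPairR M E) F = CPairR M (comp E F)"
| "comp (CFst E) F = CFst (comp E F)"
| "comp (CSnd E) F = CSnd (comp E F)"
| "comp (CLetL E N) F = CLetL (comp E F) N"
| "comp (CLetR M E) F = CLetR M (comp E F)"
| "comp (CIf1 E M N) F = CIf1 (comp E F) M N"
| "comp (CIf2 P E N) F = CIf2 P (comp E F) N"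
| "comp (CIf3 P M E) F = CIf3 P M (comp E F)"
| "comp (CInj1 E) F = CInj1 (comp E F)"
| "comp (CInj2 E) F = CInj2 (comp E F)"
| "comp (CMatch1 E M N) F = CMatch1 (comp E F) M N"
| "comp (CMatch2 P E N) F = CMatch2 P (comp E F) N"
| "comp (CMatch3 P M E) F = CMatch3 P M (comp E F)"
| "comp (CY E) F = CY (comp E F)"

lemma plug_comp: "plug (comp E F) R = plug E (plug F R)"
  by (induct E) auto

lemma step_plug: "step a b \<Longrightarrow> step (plug E a) (plug E b)"
proof (induct rule: step.induct)
  case (1 R R' F)
  then show ?case using step.intros[of R R' "comp E F"] by (simp add: plug_comp)
qed

lemma steps_plug: "step\<^sup>*\<^sup>* a b \<Longrightarrow> step\<^sup>*\<^sup>* (plug E a) (plug E b)"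
  by (induct rule: rtranclp_induct) (auto intro: rtranclp.rtrancl_into_rtrancl step_plug)

lemma step_root: "base_red R R' \<or> bool_red R R' \<Longrightarrow> step R R'"
  using step.intros[of R R' Hole] by simp

lemma steps_root: "base_red R R' \<or> bool_red R R' \<Longrightarrow> step\<^sup>*\<^sup>* R R'"
  using step_root by blast

lemma sc_lam: "step\<^sup>*\<^sup>* a b \<Longrightarrow> step\<^sup>*\<^sup>* (TLam a) (TLam b)"
  using steps_plug[of a b "CLam Hole"] by simp
lemma sc_app: "step\<^sup>*\<^sup>* a b \<Longrightarrow> step\<^sup>*\<^sup>* c d \<Longrightarrow> step\<^sup>*\<^sup>* (TApp a c) (TApp b d)"
  using steps_plug[of a b "CAppL Hole c"] steps_plug[of c d "CAppR b Hole"] by simp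
lemma sc_pair: "step\<^sup>*\<^sup>* a b \<Longrightarrow> step\<^sup>*\<^sup>* c d \<Longrightarrow> step\<^sup>*\<^sup>* (TPair a c) (TPair b d)"
  using steps_plug[of a b "CPairL Hole c"] steps_plug[of c d "CPairR b Hole"] by simp
lemma sc_fst: "step\<^sup>*\<^sup>* a b \<Longrightarrow> step\<^sup>*\<^sup>* (TFst a) (TFst b)"
  using steps_plug[of a b "CFst Hole"] by simp
lemma sc_snd: "step\<^sup>*\<^sup>* a b \<Longrightarrow> step\<^sup>*\<^sup>* (TSnd a) (TSnd b)"
  using steps_plug[of a b "CSnd Hole"] by simp
lemma sc_let: "step\<^sup>*\<^sup>* a b \<Longrightarrow> step\<^sup>*\<^sup>* c d \<Longrightarrow> step\<^sup>*\<^sup>* (TLetSkip a c) (TLetSkip b d)"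
  using steps_plug[of a b "CLetL Hole c"] steps_plug[of c d "CLetR b Hole"] by simp
lemma sc_if: "step\<^sup>*\<^sup>* a b \<Longrightarrow> step\<^sup>*\<^sup>* c d \<Longrightarrow> step\<^sup>*\<^sup>* e f \<Longrightarrow> step\<^sup>*\<^sup>* (TIf a c e) (TIf b d f)"
  using steps_plug[of a b "CIf1 Hole c e"] steps_plug[of c d "CIf2 b Hole e"] steps_plug[of e f "CIf3 b d Hole"] by simp
lemma sc_match: "step\<^sup>*\<^sup>* a b \<Longrightarrow> step\<^sup>*\<^sup>* c d \<Longrightarrow> step\<^sup>*\<^sup>* e f \<Longrightarrow> step\<^sup>*\<^sup>* (TMatch a c e) (TMatch b d f)"
  using steps_plug[of a b "CMatch1 Hole c e"] steps_plug[of c d "CMatch2 b Hole e"] steps_plug[of e f "CMatch3 b d Hole"] by simp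
lemma sc_inj1: "step\<^sup>*\<^sup>* a b \<Longrightarrow> step\<^sup>*\<^sup>* (TInj1 a) (TInj1 b)"
  using steps_plug[of a b "CInj1 Hole"] by simp
lemma sc_inj2: "step\<^sup>*\<^sup>* a b \<Longrightarrow> step\<^sup>*\<^sup>* (TInj2 a) (TInj2 b)"
  using steps_plug[of a b "CInj2 Hole"] by simp
lemma sc_Y: "step\<^sup>*\<^sup>* a b \<Longrightarrow> step\<^sup>*\<^sup>* (TY a) (TY b)"
  using steps_plug[of a b "CY Hole"] by simp

section \<open>Parallel reduction\<close>

inductive par :: "trm \<Rightarrow> trm \<Rightarrow> bool" where
  p_var: "par (TVar i) (TVar i)"
| p_fv: "par (TFV x) (TFV x)"
| p_skip: "par TSkip TSkip"
| p_tt: "par Tt Tt"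
| p_ff: "par Ff Ff"
| p_and: "par TAnd TAnd"
| p_xor: "par TXor TXor"
| p_not: "par TNot TNot"
| p_split: "par TSplit TSplit"
| p_err: "par TErr TErr"
| p_lam: "par M M' \<Longrightarrow> par (TLam M) (TLam M')"
| p_app: "par M M' \<Longrightarrow> par N N' \<Longrightarrow> par (TApp M N) (TApp M' N')"
| p_pair: "par M M' \<Longrightarrow> par N N' \<Longrightarrow> par (TPair M N) (TPair M' N')"
| p_fst: "par M M' \<Longrightarrow> par (TFst M) (TFst M')"
| p_snd: "par M M' \<Longrightarrow> par (TSnd M) (TSnd M')"
| p_let: "par M M' \<Longrightarrow> par N N' \<Longrightarrow> par (TLetSkip M N) (TLetSkip M' N')"
| p_if: "par P P' \<Longrightarrow> par M M' \<Longrightarrow> par N N' \<Longrightarrow> par (TIf P M N) (TIf P' M' N')"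
| p_inj1: "par M M' \<Longrightarrow> par (TInj1 M) (TInj1 M')"
| p_inj2: "par M M' \<Longrightarrow> par (TInj2 M) (TInj2 M')"
| p_match: "par P P' \<Longrightarrow> par M M' \<Longrightarrow> par N N' \<Longrightarrow> par (TMatch P M N) (TMatch P' M' N')"
| p_Y: "par M M' \<Longrightarrow> par (TY M) (TY M')"
| p_beta: "par M M' \<Longrightarrow> par N N' \<Longrightarrow> par (TApp (TLam M) N) (subst M' 0 N')"
| p_fstr: "par M M' \<Longrightarrow> par (TFst (TPair M N)) M'"
| p_sndr: "par N N' \<Longrightarrow> par (TSnd (TPair M N)) N'"
| p_letr: "par M M' \<Longrightarrow> par (TLetSkip TSkip M) M'"
| p_splitr: "par M M' \<Longrightarrow> par (TApp TSplit M) M'"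
| p_m1: "par P P' \<Longrightarrow> par M M' \<Longrightarrow> par (TMatch (TInj1 P) M N) (subst M' 0 P')"
| p_m2: "par P P' \<Longrightarrow> par N N' \<Longrightarrow> par (TMatch (TInj2 P) M N) (subst N' 0 P')"
| p_Yr: "par M M' \<Longrightarrow> par (TY M) (TApp M' (TY M'))"
| p_ift: "par M M' \<Longrightarrow> par (TIf Tt M N) M'"
| p_iff: "par N N' \<Longrightarrow> par (TIf Ff M N) N'"
| p_notr: "par (TApp TNot (bconst a)) (bconst (\<not> a))"
| p_andr: "par (TApp TAnd (TPair (bconst a) (bconst b))) (bconst (a \<and> b))"
| p_xorr: "par (TApp TXor (TPair (bconst a) (bconst b))) (bconst (a \<noteq> b))"

lemma par_refl[simp, intro]: "par t t"
  by (induct t) (auto intro: par.intros)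

lemma par_plug: "par a b \<Longrightarrow> par (plug E a) (plug E b)"
  by (induct E) (auto intro: par.intros)

lemma step_par: "step a b \<Longrightarrow> par a b"
proof (induct rule: step.induct)
  case (1 R R' E)
  have "par R R'" using 1
    by (auto elim!: base_red.cases bool_red.cases intro: par.intros)
  then show ?case by (rule par_plug)
qed

lemma par_steps: "par a b \<Longrightarrow> step\<^sup>*\<^sup>* a b"
proof (induct rule: par.induct)
  case (p_beta M M' N N')
  then have "step\<^sup>*\<^sup>* (TApp (TLam M) N) (TApp (TLam M') N')" by (intro sc_app sc_lam)
  then show ?case by (rule rtranclp_trans[OF _ steps_root]) (auto intro: base_red.intros)
next
  case (p_fstr M M' N)
  then have "step\<^sup>*\<^sup>* (TFst (TPair M N)) (TFst (TPair M' N))" by (intro sc_fst sc_pair) auto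
  then show ?case by (rule rtranclp_trans[OF _ steps_root]) (auto intro: base_red.intros)
next
  case (p_sndr N N' M)
  then have "step\<^sup>*\<^sup>* (TSnd (TPair M N)) (TSnd (TPair M N'))" by (intro sc_snd sc_pair) auto
  then show ?case by (rule rtranclp_trans[OF _ steps_root]) (auto intro: base_red.intros)
next
  case (p_letr M M')
  then have "step\<^sup>*\<^sup>* (TLetSkip TSkip M) (TLetSkip TSkip M')" by (intro sc_let) auto
  then show ?case by (rule rtranclp_trans[OF _ steps_root]) (auto intro: base_red.intros)
next
  case (p_splitr M M')
  then have "step\<^sup>*\<^sup>* (TApp TSplit M) (TApp TSplit M')" by (intro sc_app) auto
  then show ?case by (rule rtranclp_trans[OF _ steps_root]) (auto intro: base_red.intros)
next
  case (p_m1 P P' M M' N)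
  then have "step\<^sup>*\<^sup>* (TMatch (TInj1 P) M N) (TMatch (TInj1 P') M' N)" by (intro sc_match sc_inj1) auto
  then show ?case by (rule rtranclp_trans[OF _ steps_root]) (auto intro: base_red.intros)
next
  case (p_m2 P P' N N' M)
  then have "step\<^sup>*\<^sup>* (TMatch (TInj2 P) M N) (TMatch (TInj2 P') M N')" by (intro sc_match sc_inj2) auto
  then show ?case by (rule rtranclp_trans[OF _ steps_root]) (auto intro: base_red.intros)
next
  case (p_Yr M M')
  then have "step\<^sup>*\<^sup>* (TY M) (TY M')" by (intro sc_Y) auto
  then show ?case by (rule rtranclp_trans[OF _ steps_root]) (auto intro: base_red.intros)
next
  case (p_ift M M' N)
  then have "step\<^sup>*\<^sup>* (TIf Tt M N) (TIf Tt M' N)" by (intro sc_if) auto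
  then show ?case by (rule rtranclp_trans[OF _ steps_root]) (auto intro: bool_red.intros)
next
  case (p_iff N N' M)
  then have "step\<^sup>*\<^sup>* (TIf Ff M N) (TIf Ff M N')" by (intro sc_if) auto
  then show ?case by (rule rtranclp_trans[OF _ steps_root]) (auto intro: bool_red.intros)
next
  case (p_notr a)
  then show ?case using steps_root bool_red.intros(3) by blast
next
  case (p_andr a b)
  then show ?case using steps_root bool_red.intros(4) by blast
next
  case (p_xorr a b)
  then show ?case using steps_root bool_red.intros(5) by blast
qed (auto intro: sc_lam sc_app sc_pair sc_fst sc_snd sc_let sc_if sc_inj1 sc_inj2 sc_match sc_Y)


lemma bconst_simps[simp]: "lift c (bconst a) = bconst a" "subst (bconst a) k s = bconst a"
  "subst_fv f (bconst a) = bconst a" "close x d (bconst a) = bconst a" "fvars (bconst a) = []"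
  by (auto simp: bconst_def)

lemma par_lift: "par M M' \<Longrightarrow> par (lift k M) (lift k M')"
proof (induct arbitrary: k rule: par.induct)
  case (p_beta M M' N N')
  then show ?case using par.p_beta[of "lift (Suc k) M" "lift (Suc k) M'" "lift k N" "lift k N'"] by simp
next
  case (p_m1 P P' M M' N)
  then show ?case using par.p_m1[of "lift k P" "lift k P'" "lift (Suc k) M" "lift (Suc k) M'" "lift (Suc k) N"] by simp
next
  case (p_m2 P P' N N' M)
  then show ?case using par.p_m2[of "lift k P" "lift k P'" "lift (Suc k) N" "lift (Suc k) N'" "lift (Suc k) M"] by simp
next
  case (p_notr a) then show ?case using par.p_notr by simp
next
  case (p_andr a b) then show ?case using par.p_andr by simp
next
  case (p_xorr a b) then show ?case using par.p_xorr by simp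
qed (auto intro: par.intros)

lemma par_subst: "par M M' \<Longrightarrow> par N N' \<Longrightarrow> par (subst M k N) (subst M' k N')"
proof (induct arbitrary: k N N' rule: par.induct)
  case (p_beta M M' P P')
  have e: "subst (subst M' 0 P') k N' = subst (subst M' (Suc k) (lift 0 N')) 0 (subst P' k N')"
    using subst_subst[of 0 k M' N' P'] by simp
  show ?case unfolding e using p_beta par_lift
    by (auto intro!: par.p_beta)
next
  case (p_m1 P P' M M' N)
  have e: "subst (subst M' 0 P') k N' = subst (subst M' (Suc k) (lift 0 N')) 0 (subst P' k N')"
    using subst_subst[of 0 k M' N' P'] by simp
  show ?case unfolding e using p_m1 par_lift
    by (auto intro!: par.p_m1)
next
  case (p_m2 P P' M M' N)
  have e: "subst (subst M' 0 P') k N' = subst (subst M' (Suc k) (lift 0 N')) 0 (subst P' k N')"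
    using subst_subst[of 0 k M' N' P'] by simp
  show ?case unfolding e using p_m2 par_lift
    by (auto intro!: par.p_m2)
next
  case (p_notr a) then show ?case using par.p_notr by simp
next
  case (p_andr a b) then show ?case using par.p_andr by simp
next
  case (p_xorr a b) then show ?case using par.p_xorr by simp
qed (auto intro!: par.intros, (metis par_lift)+)


definition isb :: "trm \<Rightarrow> bool" where "isb t \<longleftrightarrow> t = Tt \<or> t = Ff"
definition bv :: "trm \<Rightarrow> bool" where "bv t \<longleftrightarrow> t = Tt"
definition isbp :: "trm \<Rightarrow> bool" where
  "isbp t = (case t of TPair a b \<Rightarrow> isb a \<and> isb b | _ \<Rightarrow> False)"
definition bv1 :: "trm \<Rightarrow> bool" where "bv1 t = (case t of TPair a b \<Rightarrow> bv a | _ \<Rightarrow> False)"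
definition bv2 :: "trm \<Rightarrow> bool" where "bv2 t = (case t of TPair a b \<Rightarrow> bv b | _ \<Rightarrow> False)"

fun cd :: "trm \<Rightarrow> trm" where
  "cd (TVar i) = TVar i"
| "cd (TFV x) = TFV x"
| "cd (TLam M) = TLam (cd M)"
| "cd (TApp M N) = (case M of
      TLam M0 \<Rightarrow> subst (cd M0) 0 (cd N)
    | TSplit \<Rightarrow> cd N
    | TNot \<Rightarrow> (if isb N then bconst (\<not> bv N) else TApp TNot (cd N))
    | TAnd \<Rightarrow> (if isbp N then bconst (bv1 N \<and> bv2 N) else TApp TAnd (cd N))
    | TXor \<Rightarrow> (if isbp N then bconst (bv1 N \<noteq> bv2 N) else TApp TXor (cd N))
    | _ \<Rightarrow> TApp (cd M) (cd N))"
| "cd (TPair M N) = TPair (cd M) (cd N)"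
| "cd (TFst M) = (case M of TPair a b \<Rightarrow> cd a | _ \<Rightarrow> TFst (cd M))"
| "cd (TSnd M) = (case M of TPair a b \<Rightarrow> cd b | _ \<Rightarrow> TSnd (cd M))"
| "cd TSkip = TSkip"
| "cd (TLetSkip M N) = (case M of TSkip \<Rightarrow> cd N | _ \<Rightarrow> TLetSkip (cd M) (cd N))"
| "cd Tt = Tt"
| "cd Ff = Ff"
| "cd (TIf P M N) = (case P of Tt \<Rightarrow> cd M | Ff \<Rightarrow> cd N | _ \<Rightarrow> TIf (cd P) (cd M) (cd N))"
| "cd TAnd = TAnd"
| "cd TXor = TXor"
| "cd TNot = TNot"
| "cd (TInj1 M) = TInj1 (cd M)"
| "cd (TInj2 M) = TInj2 (cd M)"
| "cd (TMatch P M N) = (case P of TInj1 Q \<Rightarrow> subst (cd M) 0 (cd Q)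
     | TInj2 Q \<Rightarrow> subst (cd N) 0 (cd Q) | _ \<Rightarrow> TMatch (cd P) (cd M) (cd N))"
| "cd TSplit = TSplit"
| "cd (TY M) = TApp (cd M) (TY (cd M))"
| "cd TErr = TErr"

inductive_cases parE_lam: "par (TLam M) t"
inductive_cases parE_pair: "par (TPair M N) t"
inductive_cases parE_inj1: "par (TInj1 M) t"
inductive_cases parE_inj2: "par (TInj2 M) t"
inductive_cases parE_skip: "par TSkip t"
inductive_cases parE_tt: "par Tt t"
inductive_cases parE_ff: "par Ff t"
inductive_cases parE_split: "par TSplit t"
inductive_cases parE_not: "par TNot t"
inductive_cases parE_and: "par TAnd t"
inductive_cases parE_xor: "par TXor t"

lemma par_atom_eq: "par Tt t \<Longrightarrow> t = Tt" "par Ff t \<Longrightarrow> t = Ff" "par TSkip t \<Longrightarrow> t = TSkip"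
  "par TSplit t \<Longrightarrow> t = TSplit" "par TNot t \<Longrightarrow> t = TNot" "par TAnd t \<Longrightarrow> t = TAnd"
  "par TXor t \<Longrightarrow> t = TXor"
  by (auto elim: parE_tt parE_ff parE_skip parE_split parE_not parE_and parE_xor)

lemma par_isb: "isb N \<Longrightarrow> par N N' \<Longrightarrow> N' = N"
  by (auto simp: isb_def dest: par_atom_eq)

lemma bconst_bv: "isb N \<Longrightarrow> bconst (bv N) = N"
  by (auto simp: isb_def bv_def bconst_def)

lemma par_isbp: "isbp N \<Longrightarrow> par N N' \<Longrightarrow> N' = N"
  by (cases N) (auto simp: isbp_def elim!: parE_pair dest: par_isb)

lemma isbp_form: "isbp N \<Longrightarrow> N = TPair (bconst (bv1 N)) (bconst (bv2 N))"
  by (cases N) (auto simp: isbp_def bv1_def bv2_def bconst_bv)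

lemma cd_app_other: "(\<forall>M0. M \<noteq> TLam M0) \<Longrightarrow> M \<noteq> TSplit \<Longrightarrow> M \<noteq> TNot \<Longrightarrow> M \<noteq> TAnd \<Longrightarrow> M \<noteq> TXor
  \<Longrightarrow> cd (TApp M N) = TApp (cd M) (cd N)"
  by (cases M) auto

lemma par_cd_app:
  assumes "par M M'" "par N N'" "par M' (cd M)" "par N' (cd N)"
  shows "par (TApp M' N') (cd (TApp M N))"
proof (cases M)
  case (TLam M0)
  with assms obtain M0' where "M' = TLam M0'" "par M0' (cd M0)"
    by (auto elim!: parE_lam)
  then show ?thesis using TLam assms by (auto intro: par_subst par.p_beta)
next
  case TSplit
  then show ?thesis using assms by (auto dest: par_atom_eq intro: par.p_splitr)
next
  case TNot
  then have M': "M' = TNot" using assms by (auto dest: par_atom_eq)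
  show ?thesis
  proof (cases "isb N")
    case True
    then have "N' = N" using par_isb assms by blast
    then show ?thesis using TNot M' True par.p_notr[of "bv N"] by (simp add: bconst_bv)
  next
    case False then show ?thesis using TNot M' assms by (auto intro: par.intros)
  qed
next
  case TAnd
  then have M': "M' = TAnd" using assms by (auto dest: par_atom_eq)
  show ?thesis
  proof (cases "isbp N")
    case True
    then have "N' = N" using par_isbp assms by blast
    then show ?thesis using TAnd M' True par.p_andr[of "bv1 N" "bv2 N"] isbp_form[OF True] by simp
  next
    case False then show ?thesis using TAnd M' assms by (auto intro: par.intros)
  qed
next
  case TXor
  then have M': "M' = TXor" using assms by (auto dest: par_atom_eq)
  show ?thesis
  proof (cases "isbp N")
    case True
    then have "N' = N" using par_isbp assms by blast
    then show ?thesis using TXor M' True par.p_xorr[of "bv1 N" "bv2 N"] isbp_form[OF True] by simp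
  next
    case False then show ?thesis using TXor M' assms by (auto intro: par.intros)
  qed
qed (use assms in \<open>auto intro: par.intros simp del: cd.simps simp: cd_app_other\<close>)

lemma par_cd: "par s t \<Longrightarrow> par t (cd s)"
proof (induct rule: par.induct)
  case (p_app M M' N N') show ?case by (rule par_cd_app[OF p_app(1) p_app(3) p_app(2) p_app(4)])
next
  case (p_fst M M')
  show ?case
  proof (cases "\<exists>a b. M = TPair a b")
    case True then obtain a b where "M = TPair a b" by blast
    with p_fst show ?thesis by (auto elim!: parE_pair intro: par.intros)
  next
    case False then have "cd (TFst M) = TFst (cd M)" by (cases M) auto
    with p_fst show ?thesis by (auto intro: par.intros)
  qed
next
  case (p_snd M M')
  show ?case
  proof (cases "\<exists>a b. M = TPair a b")
    case True then obtain a b where "M = TPair a b" by blast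
    with p_snd show ?thesis by (auto elim!: parE_pair intro: par.intros)
  next
    case False then have "cd (TSnd M) = TSnd (cd M)" by (cases M) auto
    with p_snd show ?thesis by (auto intro: par.intros)
  qed
next
  case (p_let M M' N N')
  show ?case
  proof (cases "M = TSkip")
    case True
    with p_let show ?thesis by (auto dest: par_atom_eq intro: par.intros)
  next
    case False then have "cd (TLetSkip M N) = TLetSkip (cd M) (cd N)" by (cases M) auto
    with p_let show ?thesis by (auto intro: par.intros)
  qed
next
  case (p_if P P' M M' N N')
  show ?case
  proof (cases "P = Tt \<or> P = Ff")
    case True
    then show ?thesis
    proof
      assume "P = Tt" then have "P' = Tt" using p_if par_atom_eq by blast
      with p_if \<open>P = Tt\<close> show ?thesis by (auto intro: par.intros)
    next
      assume "P = Ff" then have "P' = Ff" using p_if par_atom_eq by blast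
      with p_if \<open>P = Ff\<close> show ?thesis by (auto intro: par.intros)
    qed
  next
    case False then have "cd (TIf P M N) = TIf (cd P) (cd M) (cd N)" by (cases P) auto
    with p_if show ?thesis by (auto intro: par.intros)
  qed
next
  case (p_match P P' M M' N N')
  show ?case
  proof (cases "\<exists>Q. P = TInj1 Q")
    case True then obtain Q where "P = TInj1 Q" by blast
    with p_match show ?thesis by (auto elim!: parE_inj1 intro: par.intros)
  next
    case F1: False
    show ?thesis
    proof (cases "\<exists>Q. P = TInj2 Q")
      case True then obtain Q where "P = TInj2 Q" by blast
      with p_match show ?thesis by (auto elim!: parE_inj2 intro: par.intros)
    next
      case False then have "cd (TMatch P M N) = TMatch (cd P) (cd M) (cd N)" using F1 by (cases P) auto
      with p_match show ?thesis by (auto intro: par.intros)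
    qed
  qed
next
  case (p_beta M M' N N') then show ?case by (auto intro: par_subst)
next
  case (p_m1 P P' M M' N) then show ?case by (auto intro: par_subst)
next
  case (p_m2 P P' N N' M) then show ?case by (auto intro: par_subst)
next
  case (p_notr a) then show ?case by (cases a) (auto simp: bconst_def isb_def bv_def)
next
  case (p_andr a b) then show ?case by (cases a; cases b) (auto simp: bconst_def isbp_def isb_def bv_def bv1_def bv2_def)
next
  case (p_xorr a b) then show ?case by (cases a; cases b) (auto simp: bconst_def isbp_def isb_def bv_def bv1_def bv2_def)
qed (auto intro: par.intros)

lemma par_diamond: "par a b \<Longrightarrow> par a c \<Longrightarrow> \<exists>d. par b d \<and> par c d"
  using par_cd by blast

lemma par_strip: "par\<^sup>*\<^sup>* a c \<Longrightarrow> par a b \<Longrightarrow> \<exists>d. par\<^sup>*\<^sup>* b d \<and> par c d"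
proof (induct arbitrary: b rule: rtranclp_induct)
  case base then show ?case by auto
next
  case (step y z)
  then obtain d where "par\<^sup>*\<^sup>* b d" "par y d" by blast
  moreover obtain e where "par d e" "par z e" using par_diamond[OF \<open>par y d\<close> \<open>par y z\<close>] by blast
  ultimately show ?case by (meson rtranclp.rtrancl_into_rtrancl)
qed

lemma par_confl: "par\<^sup>*\<^sup>* a b \<Longrightarrow> par\<^sup>*\<^sup>* a c \<Longrightarrow> \<exists>d. par\<^sup>*\<^sup>* b d \<and> par\<^sup>*\<^sup>* c d"
proof (induct arbitrary: c rule: rtranclp_induct)
  case base then show ?case by auto
next
  case (step y z)
  then obtain d where "par\<^sup>*\<^sup>* y d" "par\<^sup>*\<^sup>* c d" by blast
  moreover obtain e where "par\<^sup>*\<^sup>* z e" "par d e" using par_strip[OF \<open>par\<^sup>*\<^sup>* y d\<close> \<open>par y z\<close>] by blast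
  ultimately show ?case by (meson rtranclp.rtrancl_into_rtrancl)
qed

lemma steps_pars: "step\<^sup>*\<^sup>* a b \<Longrightarrow> par\<^sup>*\<^sup>* a b"
  by (induct rule: rtranclp_induct) (auto intro: rtranclp.rtrancl_into_rtrancl step_par)

lemma pars_steps: "par\<^sup>*\<^sup>* a b \<Longrightarrow> step\<^sup>*\<^sup>* a b"
  by (induct rule: rtranclp_induct) (auto intro: rtranclp_trans par_steps)

lemma step_confl: "step\<^sup>*\<^sup>* a b \<Longrightarrow> step\<^sup>*\<^sup>* a c \<Longrightarrow> \<exists>d. step\<^sup>*\<^sup>* b d \<and> step\<^sup>*\<^sup>* c d"
  using par_confl steps_pars pars_steps by meson


inductive nf_val :: "trm \<Rightarrow> bool" where
  "nf_val Tt" | "nf_val Ff" | "nf_val TSkip" | "nf_val a \<Longrightarrow> nf_val b \<Longrightarrow> nf_val (TPair a b)"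

lemma nf_val_bconst[simp]: "nf_val (bconst b)"
  by (auto simp: bconst_def intro: nf_val.intros)

lemma nf_val_tuple: "\<forall>x\<in>set xs. nf_val x \<Longrightarrow> nf_val (tuple xs)"
  by (induct xs rule: tuple.induct) (auto intro: nf_val.intros)

lemma nf_val_tuple_bconst: "nf_val (tuple (map bconst cs))"
  by (rule nf_val_tuple) auto

lemma nf_val_plug: "nf_val (plug E R) \<Longrightarrow> nf_val R"
  by (induct E) (auto elim: nf_val.cases)

lemma nf_val_nobase: "nf_val R \<Longrightarrow> \<not> base_red R R'"
  by (induct rule: nf_val.induct) (auto elim: base_red.cases)

lemma nf_val_nobool: "nf_val R \<Longrightarrow> \<not> bool_red R R'"
  by (induct rule: nf_val.induct) (auto elim: bool_red.cases)

lemma nf_val_noredex: "nf_val R \<Longrightarrow> \<not> (base_red R R' \<or> bool_red R R')"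
  using nf_val_nobase nf_val_nobool by blast

lemma nf_val_nostep: "nf_val t \<Longrightarrow> \<not> step t u"
  by (metis step.cases nf_val_plug nf_val_noredex)

lemma nf_val_steps: "step\<^sup>*\<^sup>* t u \<Longrightarrow> nf_val t \<Longrightarrow> u = t"
  by (induct rule: converse_rtranclp_induct) (auto dest: nf_val_nostep)

lemma nf_val_props: "nf_val t \<Longrightarrow> lift c t = t \<and> close x d t = t \<and> subst_fv f t = t \<and> subst t k s = t \<and> fvars t = []"
  by (induct arbitrary: c d k rule: nf_val.induct) auto

section \<open>Free-variable substitution lemmas\<close>

lemma sfv_cong: "(\<forall>x\<in>set (fvars t). f x = g x) \<Longrightarrow> subst_fv f t = subst_fv g t"
  by (induct t) auto

lemma sfv_id: "(\<forall>x\<in>set (fvars t). f x = TFV x) \<Longrightarrow> subst_fv f t = t"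
  by (induct t) auto

lemma fvars_lift[simp]: "fvars (lift c t) = fvars t"
  by (induct t arbitrary: c) auto

lemma fvars_subst: "set (fvars (subst t k s)) \<subseteq> set (fvars t) \<union> set (fvars s)"
  by (induct t arbitrary: k s) (auto simp: subset_iff, (metis fvars_lift)+)

lemma sfv_lift: "(\<forall>x c. lift c (f x) = f x) \<Longrightarrow> subst_fv f (lift c t) = lift c (subst_fv f t)"
  by (induct t arbitrary: c) auto

lemma sfv_subst: "(\<forall>x c. lift c (f x) = f x) \<Longrightarrow> (\<forall>x k s. subst (f x) k s = f x) \<Longrightarrow>
  subst_fv f (subst t k s) = subst (subst_fv f t) k (subst_fv f s)"
  by (induct t arbitrary: k s) (auto simp: sfv_lift)

lemma sfv_comp: "subst_fv g (subst_fv f t) = subst_fv (\<lambda>x. subst_fv g (f x)) t"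
  by (induct t) auto

definition goodf :: "(nat \<Rightarrow> trm) \<Rightarrow> bool" where
  "goodf f \<longleftrightarrow> (\<forall>x. f x = TFV x \<or> (\<exists>b. f x = bconst b))"

lemma goodf_lift: "goodf f \<Longrightarrow> lift c (f x) = f x"
  unfolding goodf_def by (metis bconst_simps(1) lift.simps(2))

lemma goodf_subst: "goodf f \<Longrightarrow> subst (f x) k s = f x"
  unfolding goodf_def by (metis bconst_simps(2) subst.simps(2))

lemma sfv_subst_good: "goodf f \<Longrightarrow> subst_fv f (subst t k s) = subst (subst_fv f t) k (subst_fv f s)"
  by (rule sfv_subst) (auto simp: goodf_lift goodf_subst)

fun ctx_sfv :: "(nat \<Rightarrow> trm) \<Rightarrow> ctx \<Rightarrow> ctx" where
  "ctx_sfv f Hole = Hole"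
| "ctx_sfv f (CLam E) = CLam (ctx_sfv f E)"
| "ctx_sfv f (CAppL E N) = CAppL (ctx_sfv f E) (subst_fv f N)"
| "ctx_sfv f (CAppR M E) = CAppR (subst_fv f M) (ctx_sfv f E)"
| "ctx_sfv f (CPairL E N) = CPairL (ctx_sfv f E) (subst_fv f N)"
| "ctx_sfv f (CPairR M E) = CPairR (subst_fv f M) (ctx_sfv f E)"
| "ctx_sfv f (CFst E) = CFst (ctx_sfv f E)"
| "ctx_sfv f (CSnd E) = CSnd (ctx_sfv f E)"
| "ctx_sfv f (CLetL E N) = CLetL (ctx_sfv f E) (subst_fv f N)"
| "ctx_sfv f (CLetR M E) = CLetR (subst_fv f M) (ctx_sfv f E)"
| "ctx_sfv f (CIf1 E M N) = CIf1 (ctx_sfv f E) (subst_fv f M) (subst_fv f N)"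
| "ctx_sfv f (CIf2 P E N) = CIf2 (subst_fv f P) (ctx_sfv f E) (subst_fv f N)"
| "ctx_sfv f (CIf3 P M E) = CIf3 (subst_fv f P) (subst_fv f M) (ctx_sfv f E)"
| "ctx_sfv f (CInj1 E) = CInj1 (ctx_sfv f E)"
| "ctx_sfv f (CInj2 E) = CInj2 (ctx_sfv f E)"
| "ctx_sfv f (CMatch1 E M N) = CMatch1 (ctx_sfv f E) (subst_fv f M) (subst_fv f N)"
| "ctx_sfv f (CMatch2 P E N) = CMatch2 (subst_fv f P) (ctx_sfv f E) (subst_fv f N)"
| "ctx_sfv f (CMatch3 P M E) = CMatch3 (subst_fv f P) (subst_fv f M) (ctx_sfv f E)"
| "ctx_sfv f (CY E) = CY (ctx_sfv f E)"

lemma sfv_plug: "subst_fv f (plug E R) = plug (ctx_sfv f E) (subst_fv f R)"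
  by (induct E) auto

lemma fvars_plug: "set (fvars (plug E R)) = set (fvars (plug E TSkip)) \<union> set (fvars R)"
  by (induct E) auto

lemma ctx_sfv_cong: "(\<forall>x\<in>set (fvars (plug E TSkip)). f x = g x) \<Longrightarrow> ctx_sfv f E = ctx_sfv g E"
  by (induct E) (auto intro: sfv_cong)



section \<open>Approximation (TErr stands for anything)\<close>

inductive approx :: "trm \<Rightarrow> trm \<Rightarrow> bool" where
  a_err: "approx TErr t"
| a_var: "approx (TVar i) (TVar i)"
| a_fv: "approx (TFV x) (TFV x)"
| a_skip: "approx TSkip TSkip"
| a_tt: "approx Tt Tt"
| a_ff: "approx Ff Ff"
| a_and: "approx TAnd TAnd"
| a_xor: "approx TXor TXor"
| a_not: "approx TNot TNot"
| a_split: "approx TSplit TSplit"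
| a_lam: "approx M M' \<Longrightarrow> approx (TLam M) (TLam M')"
| a_app: "approx M M' \<Longrightarrow> approx N N' \<Longrightarrow> approx (TApp M N) (TApp M' N')"
| a_pair: "approx M M' \<Longrightarrow> approx N N' \<Longrightarrow> approx (TPair M N) (TPair M' N')"
| a_fst: "approx M M' \<Longrightarrow> approx (TFst M) (TFst M')"
| a_snd: "approx M M' \<Longrightarrow> approx (TSnd M) (TSnd M')"
| a_let: "approx M M' \<Longrightarrow> approx N N' \<Longrightarrow> approx (TLetSkip M N) (TLetSkip M' N')"
| a_if: "approx P P' \<Longrightarrow> approx M M' \<Longrightarrow> approx N N' \<Longrightarrow> approx (TIf P M N) (TIf P' M' N')"
| a_inj1: "approx M M' \<Longrightarrow> approx (TInj1 M) (TInj1 M')"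
| a_inj2: "approx M M' \<Longrightarrow> approx (TInj2 M) (TInj2 M')"
| a_match: "approx P P' \<Longrightarrow> approx M M' \<Longrightarrow> approx N N' \<Longrightarrow> approx (TMatch P M N) (TMatch P' M' N')"
| a_Y: "approx M M' \<Longrightarrow> approx (TY M) (TY M')"

lemma approx_refl[simp, intro]: "approx t t"
  by (induct t) (auto intro: approx.intros)

lemma approx_lift: "approx M M' \<Longrightarrow> approx (lift c M) (lift c M')"
  by (induct arbitrary: c rule: approx.induct) (auto intro: approx.intros)

lemma approx_subst: "approx M M' \<Longrightarrow> approx N N' \<Longrightarrow> approx (subst M k N) (subst M' k N')"
  by (induct arbitrary: k N N' rule: approx.induct) (auto intro!: approx.intros, (metis approx_lift)+)

lemma approx_bconst: "approx (bconst a) t \<Longrightarrow> t = bconst a"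
  by (auto simp: bconst_def elim: approx.cases)

lemma approx_nf: "approx a t \<Longrightarrow> nf_val a \<Longrightarrow> t = a"
  by (induct rule: approx.induct) (auto elim: nf_val.cases)

inductive_cases apE: "approx (TLam M) t" "approx (TApp M N) t" "approx (TPair M N) t"
  "approx (TFst M) t" "approx (TSnd M) t" "approx (TLetSkip M N) t" "approx (TIf P M N) t"
  "approx (TInj1 M) t" "approx (TInj2 M) t" "approx (TMatch P M N) t" "approx (TY M) t"
  "approx TSkip t" "approx TSplit t" "approx Tt t" "approx Ff t" "approx TNot t"
  "approx TAnd t" "approx TXor t"

lemma approx_plug: "approx (plug E X) t \<Longrightarrow>
  \<exists>E' Y. t = plug E' Y \<and> approx X Y \<and> (\<forall>X' Y'. approx X' Y' \<longrightarrow> approx (plug E X') (plug E' Y'))"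
proof (induct E arbitrary: t)
  case Hole then show ?case by (metis plug.simps(1))
next
  case (CLam E)
  from CLam.prems obtain a0 where t: "t = TLam a0" "approx (plug E X) a0" by (auto elim: apE)
  from CLam.hyps[OF t(2)] obtain E' Y where h: "a0 = plug E' Y" "approx X Y" "\<forall>X' Y'. approx X' Y' \<longrightarrow> approx (plug E X') (plug E' Y')" by blast
  show ?case using t h by (intro exI[of _ "CLam E'"] exI[of _ Y]) (auto intro: approx.intros)
next
  case (CAppL E N)
  from CAppL.prems obtain a0 a1 where t: "t = TApp a0 a1" "approx (plug E X) a0" "approx N a1" by (auto elim: apE)
  from CAppL.hyps[OF t(2)] obtain E' Y where h: "a0 = plug E' Y" "approx X Y" "\<forall>X' Y'. approx X' Y' \<longrightarrow> approx (plug E X') (plug E' Y')" by blast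
  show ?case using t h by (intro exI[of _ "CAppL E' a1"] exI[of _ Y]) (auto intro: approx.intros)
next
  case (CAppR M E)
  from CAppR.prems obtain a0 a1 where t: "t = TApp a0 a1" "approx M a0" "approx (plug E X) a1" by (auto elim: apE)
  from CAppR.hyps[OF t(3)] obtain E' Y where h: "a1 = plug E' Y" "approx X Y" "\<forall>X' Y'. approx X' Y' \<longrightarrow> approx (plug E X') (plug E' Y')" by blast
  show ?case using t h by (intro exI[of _ "CAppR a0 E'"] exI[of _ Y]) (auto intro: approx.intros)
next
  case (CPairL E N)
  from CPairL.prems obtain a0 a1 where t: "t = TPair a0 a1" "approx (plug E X) a0" "approx N a1" by (auto elim: apE)
  from CPairL.hyps[OF t(2)] obtain E' Y where h: "a0 = plug E' Y" "approx X Y" "\<forall>X' Y'. approx X' Y' \<longrightarrow> approx (plug E X') (plug E' Y')" by blast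
  show ?case using t h by (intro exI[of _ "CPairL E' a1"] exI[of _ Y]) (auto intro: approx.intros)
next
  case (CPairR M E)
  from CPairR.prems obtain a0 a1 where t: "t = TPair a0 a1" "approx M a0" "approx (plug E X) a1" by (auto elim: apE)
  from CPairR.hyps[OF t(3)] obtain E' Y where h: "a1 = plug E' Y" "approx X Y" "\<forall>X' Y'. approx X' Y' \<longrightarrow> approx (plug E X') (plug E' Y')" by blast
  show ?case using t h by (intro exI[of _ "CPairR a0 E'"] exI[of _ Y]) (auto intro: approx.intros)
next
  case (CFst E)
  from CFst.prems obtain a0 where t: "t = TFst a0" "approx (plug E X) a0" by (auto elim: apE)
  from CFst.hyps[OF t(2)] obtain E' Y where h: "a0 = plug E' Y" "approx X Y" "\<forall>X' Y'. approx X' Y' \<longrightarrow> approx (plug E X') (plug E' Y')" by blast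
  show ?case using t h by (intro exI[of _ "CFst E'"] exI[of _ Y]) (auto intro: approx.intros)
next
  case (CSnd E)
  from CSnd.prems obtain a0 where t: "t = TSnd a0" "approx (plug E X) a0" by (auto elim: apE)
  from CSnd.hyps[OF t(2)] obtain E' Y where h: "a0 = plug E' Y" "approx X Y" "\<forall>X' Y'. approx X' Y' \<longrightarrow> approx (plug E X') (plug E' Y')" by blast
  show ?case using t h by (intro exI[of _ "CSnd E'"] exI[of _ Y]) (auto intro: approx.intros)
next
  case (CLetL E N)
  from CLetL.prems obtain a0 a1 where t: "t = TLetSkip a0 a1" "approx (plug E X) a0" "approx N a1" by (auto elim: apE)
  from CLetL.hyps[OF t(2)] obtain E' Y where h: "a0 = plug E' Y" "approx X Y" "\<forall>X' Y'. approx X' Y' \<longrightarrow> approx (plug E X') (plug E' Y')" by blast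
  show ?case using t h by (intro exI[of _ "CLetL E' a1"] exI[of _ Y]) (auto intro: approx.intros)
next
  case (CLetR M E)
  from CLetR.prems obtain a0 a1 where t: "t = TLetSkip a0 a1" "approx M a0" "approx (plug E X) a1" by (auto elim: apE)
  from CLetR.hyps[OF t(3)] obtain E' Y where h: "a1 = plug E' Y" "approx X Y" "\<forall>X' Y'. approx X' Y' \<longrightarrow> approx (plug E X') (plug E' Y')" by blast
  show ?case using t h by (intro exI[of _ "CLetR a0 E'"] exI[of _ Y]) (auto intro: approx.intros)
next
  case (CIf1 E M N)
  from CIf1.prems obtain a0 a1 a2 where t: "t = TIf a0 a1 a2" "approx (plug E X) a0" "approx M a1" "approx N a2" by (auto elim: apE)
  from CIf1.hyps[OF t(2)] obtain E' Y where h: "a0 = plug E' Y" "approx X Y" "\<forall>X' Y'. approx X' Y' \<longrightarrow> approx (plug E X') (plug E' Y')" by blast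
  show ?case using t h by (intro exI[of _ "CIf1 E' a1 a2"] exI[of _ Y]) (auto intro: approx.intros)
next
  case (CIf2 P E N)
  from CIf2.prems obtain a0 a1 a2 where t: "t = TIf a0 a1 a2" "approx P a0" "approx (plug E X) a1" "approx N a2" by (auto elim: apE)
  from CIf2.hyps[OF t(3)] obtain E' Y where h: "a1 = plug E' Y" "approx X Y" "\<forall>X' Y'. approx X' Y' \<longrightarrow> approx (plug E X') (plug E' Y')" by blast
  show ?case using t h by (intro exI[of _ "CIf2 a0 E' a2"] exI[of _ Y]) (auto intro: approx.intros)
next
  case (CIf3 P M E)
  from CIf3.prems obtain a0 a1 a2 where t: "t = TIf a0 a1 a2" "approx P a0" "approx M a1" "approx (plug E X) a2" by (auto elim: apE)
  from CIf3.hyps[OF t(4)] obtain E' Y where h: "a2 = plug E' Y" "approx X Y" "\<forall>X' Y'. approx X' Y' \<longrightarrow> approx (plug E X') (plug E' Y')" by blast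
  show ?case using t h by (intro exI[of _ "CIf3 a0 a1 E'"] exI[of _ Y]) (auto intro: approx.intros)
next
  case (CInj1 E)
  from CInj1.prems obtain a0 where t: "t = TInj1 a0" "approx (plug E X) a0" by (auto elim: apE)
  from CInj1.hyps[OF t(2)] obtain E' Y where h: "a0 = plug E' Y" "approx X Y" "\<forall>X' Y'. approx X' Y' \<longrightarrow> approx (plug E X') (plug E' Y')" by blast
  show ?case using t h by (intro exI[of _ "CInj1 E'"] exI[of _ Y]) (auto intro: approx.intros)
next
  case (CInj2 E)
  from CInj2.prems obtain a0 where t: "t = TInj2 a0" "approx (plug E X) a0" by (auto elim: apE)
  from CInj2.hyps[OF t(2)] obtain E' Y where h: "a0 = plug E' Y" "approx X Y" "\<forall>X' Y'. approx X' Y' \<longrightarrow> approx (plug E X') (plug E' Y')" by blast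
  show ?case using t h by (intro exI[of _ "CInj2 E'"] exI[of _ Y]) (auto intro: approx.intros)
next
  case (CMatch1 E M N)
  from CMatch1.prems obtain a0 a1 a2 where t: "t = TMatch a0 a1 a2" "approx (plug E X) a0" "approx M a1" "approx N a2" by (auto elim: apE)
  from CMatch1.hyps[OF t(2)] obtain E' Y where h: "a0 = plug E' Y" "approx X Y" "\<forall>X' Y'. approx X' Y' \<longrightarrow> approx (plug E X') (plug E' Y')" by blast
  show ?case using t h by (intro exI[of _ "CMatch1 E' a1 a2"] exI[of _ Y]) (auto intro: approx.intros)
next
  case (CMatch2 P E N)
  from CMatch2.prems obtain a0 a1 a2 where t: "t = TMatch a0 a1 a2" "approx P a0" "approx (plug E X) a1" "approx N a2" by (auto elim: apE)
  from CMatch2.hyps[OF t(3)] obtain E' Y where h: "a1 = plug E' Y" "approx X Y" "\<forall>X' Y'. approx X' Y' \<longrightarrow> approx (plug E X') (plug E' Y')" by blast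
  show ?case using t h by (intro exI[of _ "CMatch2 a0 E' a2"] exI[of _ Y]) (auto intro: approx.intros)
next
  case (CMatch3 P M E)
  from CMatch3.prems obtain a0 a1 a2 where t: "t = TMatch a0 a1 a2" "approx P a0" "approx M a1" "approx (plug E X) a2" by (auto elim: apE)
  from CMatch3.hyps[OF t(4)] obtain E' Y where h: "a2 = plug E' Y" "approx X Y" "\<forall>X' Y'. approx X' Y' \<longrightarrow> approx (plug E X') (plug E' Y')" by blast
  show ?case using t h by (intro exI[of _ "CMatch3 a0 a1 E'"] exI[of _ Y]) (auto intro: approx.intros)
next
  case (CY E)
  from CY.prems obtain a0 where t: "t = TY a0" "approx (plug E X) a0" by (auto elim: apE)
  from CY.hyps[OF t(2)] obtain E' Y where h: "a0 = plug E' Y" "approx X Y" "\<forall>X' Y'. approx X' Y' \<longrightarrow> approx (plug E X') (plug E' Y')" by blast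
  show ?case using t h by (intro exI[of _ "CY E'"] exI[of _ Y]) (auto intro: approx.intros)
qed

lemma approx_base: "base_red R R' \<Longrightarrow> approx R Y \<Longrightarrow> \<exists>Y'. base_red Y Y' \<and> approx R' Y'"
proof (induct rule: base_red.induct)
  case (1 M N) then show ?case by (auto elim!: apE intro: base_red.intros approx_subst)
next
  case (2 M1 M2) then show ?case by (auto elim!: apE intro: base_red.intros)
next
  case (3 M1 M2) then show ?case by (auto elim!: apE intro: base_red.intros)
next
  case (4 M) then show ?case by (auto elim!: apE intro: base_red.intros)
next
  case (5 M) then show ?case by (auto elim!: apE intro: base_red.intros)
next
  case (6 P M1 M2) then show ?case by (auto elim!: apE intro: base_red.intros approx_subst)
next
  case (7 P M1 M2) then show ?case by (auto elim!: apE intro: base_red.intros approx_subst)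
next
  case (8 M) then show ?case by (auto elim!: apE intro: base_red.intros approx.intros)
qed

lemma approx_bool: "bool_red R R' \<Longrightarrow> approx R Y \<Longrightarrow> \<exists>Y'. bool_red Y Y' \<and> approx R' Y'"
proof (induct rule: bool_red.induct)
  case (1 M N) then show ?case by (auto elim!: apE intro: bool_red.intros)
next
  case (2 M N) then show ?case by (auto elim!: apE intro: bool_red.intros)
next
  case (3 a) then show ?case by (auto elim!: apE dest!: approx_bconst intro: bool_red.intros)
next
  case (4 a b) then show ?case by (auto elim!: apE dest!: approx_bconst intro: bool_red.intros)
next
  case (5 a b) then show ?case by (auto elim!: apE dest!: approx_bconst intro: bool_red.intros)
qed

lemma approx_redex: "base_red R R' \<or> bool_red R R' \<Longrightarrow> approx R Y \<Longrightarrow>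
   \<exists>Y'. (base_red Y Y' \<or> bool_red Y Y') \<and> approx R' Y'"
  using approx_base approx_bool by blast


inductive typ2 :: "(nat \<Rightarrow> ty option) \<Rightarrow> ty list \<Rightarrow> trm \<Rightarrow> ty \<Rightarrow> bool" where
  u_fv: "D x = Some A \<Longrightarrow> typ2 D G (TFV x) A"
| u_var: "i < length G \<Longrightarrow> typ2 D G (TVar i) (G ! i)"
| u_lam: "typ2 D (A # G) M B \<Longrightarrow> typ2 D G (TLam M) (Arr A B)"
| u_app: "typ2 D G M (Arr A B) \<Longrightarrow> typ2 D G N A \<Longrightarrow> typ2 D G (TApp M N) B"
| u_pair: "typ2 D G M A \<Longrightarrow> typ2 D G N B \<Longrightarrow> typ2 D G (TPair M N) (Prod A B)"
| u_fst: "typ2 D G M (Prod A B) \<Longrightarrow> typ2 D G (TFst M) A"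
| u_snd: "typ2 D G M (Prod A B) \<Longrightarrow> typ2 D G (TSnd M) B"
| u_skip: "typ2 D G TSkip Unit"
| u_letskip: "typ2 D G M Unit \<Longrightarrow> typ2 D G N C \<Longrightarrow> typ2 D G (TLetSkip M N) C"
| u_tt: "typ2 D G Tt Bit"
| u_ff: "typ2 D G Ff Bit"
| u_if: "typ2 D G P Bit \<Longrightarrow> typ2 D G M C \<Longrightarrow> typ2 D G N C \<Longrightarrow> first_order C
         \<Longrightarrow> typ2 D G (TIf P M N) C"
| u_and: "typ2 D G TAnd (Arr (Prod Bit Bit) Bit)"
| u_xor: "typ2 D G TXor (Arr (Prod Bit Bit) Bit)"
| u_not: "typ2 D G TNot (Arr Bit Bit)"
| u_inj1: "typ2 D G M A \<Longrightarrow> typ2 D G (TInj1 M) (Sum A B)"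
| u_inj2: "typ2 D G M B \<Longrightarrow> typ2 D G (TInj2 M) (Sum A B)"
| u_match: "typ2 D G P (Sum A B) \<Longrightarrow> typ2 D (A # G) M C \<Longrightarrow> typ2 D (B # G) N C
         \<Longrightarrow> typ2 D G (TMatch P M N) C"
| u_split: "typ2 D G TSplit (Arr (List A) (Sum Unit (Prod A (List A))))"
| u_fold: "typ2 D G M (Sum Unit (Prod A (List A))) \<Longrightarrow> typ2 D G M (List A)"
| u_Y: "typ2 D G M (Arr A A) \<Longrightarrow> typ2 D G (TY M) A"
| u_err: "typ2 D G TErr A"
| u_unfold: "typ2 D G M (List A) \<Longrightarrow> typ2 D G M (Sum Unit (Prod A (List A)))"

lemmas typ2_sd = typ2.intros(1-19) typ2.intros(21-22)

lemma typing_sfv: "typing D G M T \<Longrightarrow> (\<forall>x A G'. D x = Some A \<longrightarrow> typ2 D' G' (f x) A) \<Longrightarrow>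
   typ2 D' G (subst_fv f M) T"
  by (induct rule: typing.induct) (auto intro: typ2_sd typ2.u_fold)

lemma typ2_bconst[simp, intro]: "typ2 D G (bconst a) Bit"
  by (auto simp: bconst_def intro: typ2_sd)

lemma typ2_lift: "typ2 D G t T \<Longrightarrow> k \<le> length G \<Longrightarrow> typ2 D (take k G @ A # drop k G) (lift k t) T"
proof (induct arbitrary: k rule: typ2.induct)
  case (u_var i G D)
  show ?case
  proof (cases "i < k")
    case True
    then have "(take k G @ A # drop k G) ! i = G ! i" using u_var by (simp add: nth_append)
    then show ?thesis using True u_var typ2.u_var[of i "take k G @ A # drop k G" D] by simp
  next
    case False
    then have "(take k G @ A # drop k G) ! Suc i = G ! i" using u_var by (simp add: nth_append)
    then show ?thesis using False u_var typ2.u_var[of "Suc i" "take k G @ A # drop k G" D] by simp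
  qed
next
  case (u_lam D A' G M B)
  then show ?case using u_lam(2)[of "Suc k"] by (auto intro: typ2_sd)
next
  case (u_match D G P A' B M C N)
  then show ?case using u_match(4)[of "Suc k"] u_match(6)[of "Suc k"] u_match(2)[of k]
    by (auto intro: typ2_sd)
next
  case (u_fold D G M A') then show ?case by (blast intro: typ2.u_fold)
next
  case (u_unfold D G M A') then show ?case by (blast intro: typ2.u_unfold)
qed (auto intro: typ2_sd)

lemma typ2_subst: "typ2 D G' t T \<Longrightarrow> G' = take k G @ A # drop k G \<Longrightarrow> k \<le> length G \<Longrightarrow>
  typ2 D G s A \<Longrightarrow> typ2 D G (subst t k s) T"
proof (induct arbitrary: G k s rule: typ2.induct)
  case (u_var i G' D)
  consider "i < k" | "i = k" | "k < i" by arith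
  then show ?case
  proof cases
    case 1
    then have "G' ! i = G ! i" using u_var by (simp add: nth_append)
    then show ?thesis using 1 u_var typ2.u_var[of i G D] by simp
  next
    case 2
    then have "G' ! i = A" using u_var by (simp add: nth_append)
    then show ?thesis using 2 u_var by simp
  next
    case 3
    then have "G' ! i = G ! (i - 1)" "i - 1 < length G" using u_var by (auto simp: nth_append)
    then show ?thesis using 3 u_var typ2.u_var[of "i - 1" G D] by simp
  qed
next
  case (u_lam D A' G' M B)
  have "typ2 D (A' # G) (lift 0 s) A" using typ2_lift[OF u_lam(5), of 0 A'] by simp
  then show ?case using u_lam(2)[of "Suc k" "A' # G"] u_lam(3,4) by (auto intro: typ2_sd)
next
  case (u_match D G' P A' B M C N)
  have l1: "typ2 D (A' # G) (lift 0 s) A" using typ2_lift[OF u_match(9), of 0 A'] by simp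
  have l2: "typ2 D (B # G) (lift 0 s) A" using typ2_lift[OF u_match(9), of 0 B] by simp
  show ?case using u_match(2)[of k G s] u_match(4)[of "Suc k" "A' # G"] u_match(6)[of "Suc k" "B # G"]
      u_match(7,8,9) l1 l2 by (auto intro: typ2_sd)
next
  case (u_fold D G' M A') then show ?case by (blast intro: typ2.u_fold)
next
  case (u_unfold D G' M A') then show ?case by (blast intro: typ2.u_unfold)
next
  case (u_app D G' M A' B N)
  show ?case using u_app(2)[OF u_app(5-7)] u_app(4)[OF u_app(5-7)] by (simp add: typ2.u_app)
next
  case (u_pair D G' M A' N B)
  show ?case using u_pair(2)[OF u_pair(5-7)] u_pair(4)[OF u_pair(5-7)] by (simp add: typ2.u_pair)
next
  case (u_fst D G' M A' B)
  show ?case using u_fst(2)[OF u_fst(3-5)] by (simp add: typ2.u_fst)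
next
  case (u_snd D G' M A' B)
  show ?case using u_snd(2)[OF u_snd(3-5)] by (simp add: typ2.u_snd)
next
  case (u_letskip D G' M N C)
  show ?case using u_letskip(2)[OF u_letskip(5-7)] u_letskip(4)[OF u_letskip(5-7)] by (simp add: typ2.u_letskip)
next
  case (u_if D G' P M C N)
  show ?case using u_if(2)[OF u_if(8-10)] u_if(4)[OF u_if(8-10)] u_if(6)[OF u_if(8-10)] u_if(7) by (simp add: typ2.u_if)
next
  case (u_inj1 D G' M A' B)
  show ?case using u_inj1(2)[OF u_inj1(3-5)] by (simp add: typ2.u_inj1)
next
  case (u_inj2 D G' M B A')
  show ?case using u_inj2(2)[OF u_inj2(3-5)] by (simp add: typ2.u_inj2)
next
  case (u_Y D G' M A')
  show ?case using u_Y(2)[OF u_Y(3-5)] by (simp add: typ2.u_Y)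
qed (auto intro: typ2_sd)


lemma inv_lam: "typ2 D G t T \<Longrightarrow> t = TLam M \<Longrightarrow> \<exists>A B. T = Arr A B \<and> typ2 D (A # G) M B"
  by (induct rule: typ2.induct) auto
lemma inv_split: "typ2 D G t T \<Longrightarrow> t = TSplit \<Longrightarrow> \<exists>A. T = Arr (List A) (Sum Unit (Prod A (List A)))"
  by (induct rule: typ2.induct) auto
lemma inv_not: "typ2 D G t T \<Longrightarrow> t = TNot \<Longrightarrow> T = Arr Bit Bit"
  by (induct rule: typ2.induct) auto
lemma inv_and: "typ2 D G t T \<Longrightarrow> t = TAnd \<Longrightarrow> T = Arr (Prod Bit Bit) Bit"
  by (induct rule: typ2.induct) auto
lemma inv_xor: "typ2 D G t T \<Longrightarrow> t = TXor \<Longrightarrow> T = Arr (Prod Bit Bit) Bit"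
  by (induct rule: typ2.induct) auto
lemma inv_pair: "typ2 D G t T \<Longrightarrow> t = TPair M1 M2 \<Longrightarrow> \<exists>A B. T = Prod A B \<and> typ2 D G M1 A \<and> typ2 D G M2 B"
  by (induct rule: typ2.induct) auto
lemma inv_bool: "typ2 D G t T \<Longrightarrow> t = Tt \<or> t = Ff \<Longrightarrow> T = Bit"
  by (induct rule: typ2.induct) auto
lemma inv_skip: "typ2 D G t T \<Longrightarrow> t = TSkip \<Longrightarrow> T = Unit"
  by (induct rule: typ2.induct) auto
lemma inv_inj1: "typ2 D G t T \<Longrightarrow> t = TInj1 P \<Longrightarrow>
   (\<forall>A B. T = Sum A B \<longrightarrow> typ2 D G P A) \<and> (\<forall>A. T = List A \<longrightarrow> typ2 D G P Unit)"
  by (induct rule: typ2.induct) auto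
lemma inv_inj2: "typ2 D G t T \<Longrightarrow> t = TInj2 P \<Longrightarrow>
   (\<forall>A B. T = Sum A B \<longrightarrow> typ2 D G P B) \<and> (\<forall>A. T = List A \<longrightarrow> typ2 D G P (Prod A (List A)))"
  by (induct rule: typ2.induct) auto

lemma sr_beta: "typ2 D G t T \<Longrightarrow> t = TApp (TLam M) N \<Longrightarrow> typ2 D G (subst M 0 N) T"
proof (induct rule: typ2.induct)
  case (u_app D G M' A B N')
  from u_app(5) have e: "M' = TLam M" "N' = N" by auto
  from inv_lam[OF u_app(1) e(1)] have "typ2 D (A # G) M B" by auto
  moreover have "typ2 D G N A" using u_app(3) e(2) by simp
  ultimately show ?case by (intro typ2_subst[of D "A # G" M B 0 G A N]) auto
next
  case (u_fold D G M' A) then show ?case by (metis typ2.u_fold)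
next
  case (u_unfold D G M' A) then show ?case by (metis typ2.u_unfold)
qed auto

lemma sr_split: "typ2 D G t T \<Longrightarrow> t = TApp TSplit N \<Longrightarrow> typ2 D G N T"
proof (induct rule: typ2.induct)
  case (u_app D G M' A B N')
  then obtain A1 where "A = List A1" "B = Sum Unit (Prod A1 (List A1))" using inv_split[OF u_app(1)] by auto
  then show ?case using u_app typ2.u_unfold by auto
next
  case (u_fold D G M' A) then show ?case by (metis typ2.u_fold)
next
  case (u_unfold D G M' A) then show ?case by (metis typ2.u_unfold)
qed auto

lemma sr_not: "typ2 D G t T \<Longrightarrow> t = TApp TNot N \<Longrightarrow> T = Bit"
proof (induct rule: typ2.induct)
  case (u_app D G M' A B N') then show ?case using inv_not[OF u_app(1)] by auto
qed auto

lemma sr_and: "typ2 D G t T \<Longrightarrow> t = TApp TAnd N \<Longrightarrow> T = Bit"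
proof (induct rule: typ2.induct)
  case (u_app D G M' A B N') then show ?case using inv_and[OF u_app(1)] by auto
qed auto

lemma sr_xor: "typ2 D G t T \<Longrightarrow> t = TApp TXor N \<Longrightarrow> T = Bit"
proof (induct rule: typ2.induct)
  case (u_app D G M' A B N') then show ?case using inv_xor[OF u_app(1)] by auto
qed auto

lemma sr_fst: "typ2 D G t T \<Longrightarrow> t = TFst (TPair M1 M2) \<Longrightarrow> typ2 D G M1 T"
proof (induct rule: typ2.induct)
  case (u_fst D G M A B) then show ?case using inv_pair[OF u_fst(1)] by auto
next
  case (u_fold D G M' A) then show ?case by (metis typ2.u_fold)
next
  case (u_unfold D G M' A) then show ?case by (metis typ2.u_unfold)
qed auto

lemma sr_snd: "typ2 D G t T \<Longrightarrow> t = TSnd (TPair M1 M2) \<Longrightarrow> typ2 D G M2 T"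
proof (induct rule: typ2.induct)
  case (u_snd D G M A B) then show ?case using inv_pair[OF u_snd(1)] by auto
next
  case (u_fold D G M' A) then show ?case by (metis typ2.u_fold)
next
  case (u_unfold D G M' A) then show ?case by (metis typ2.u_unfold)
qed auto

lemma sr_let: "typ2 D G t T \<Longrightarrow> t = TLetSkip TSkip M \<Longrightarrow> typ2 D G M T"
proof (induct rule: typ2.induct)
  case (u_tt D G) then show ?case by simp
next
  case (u_fold D G M' A) then show ?case by (metis typ2.u_fold)
next
  case (u_unfold D G M' A) then show ?case by (metis typ2.u_unfold)
qed auto

lemma sr_ift: "typ2 D G t T \<Longrightarrow> t = TIf Tt M N \<Longrightarrow> typ2 D G M T"
proof (induct rule: typ2.induct)
  case (u_tt D G) then show ?case by simp
next
  case (u_fold D G M' A) then show ?case by (metis typ2.u_fold)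
next
  case (u_unfold D G M' A) then show ?case by (metis typ2.u_unfold)
qed auto

lemma sr_iff: "typ2 D G t T \<Longrightarrow> t = TIf Ff M N \<Longrightarrow> typ2 D G N T"
proof (induct rule: typ2.induct)
  case (u_tt D G) then show ?case by simp
next
  case (u_fold D G M' A) then show ?case by (metis typ2.u_fold)
next
  case (u_unfold D G M' A) then show ?case by (metis typ2.u_unfold)
qed auto

lemma sr_Y: "typ2 D G t T \<Longrightarrow> t = TY M \<Longrightarrow> typ2 D G (TApp M (TY M)) T"
proof (induct rule: typ2.induct)
  case (u_Y D G M' A) then show ?case by (auto intro: typ2.u_app typ2.u_Y)
next
  case (u_fold D G M' A) then show ?case by (metis typ2.u_fold)
next
  case (u_unfold D G M' A) then show ?case by (metis typ2.u_unfold)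
qed auto

lemma sr_m1: "typ2 D G t T \<Longrightarrow> t = TMatch (TInj1 P) M1 M2 \<Longrightarrow> typ2 D G (subst M1 0 P) T"
proof (induct rule: typ2.induct)
  case (u_match D G P' A B M C N)
  from u_match(7) have e: "P' = TInj1 P" "M = M1" "N = M2" by auto
  have "typ2 D G P A" using inv_inj1[OF u_match(1) e(1)] by auto
  moreover have "typ2 D (A # G) M1 C" using u_match(3) e(2) by simp
  ultimately show ?case by (intro typ2_subst[of D "A # G" M1 C 0 G A P]) auto
next
  case (u_fold D G M' A) then show ?case by (metis typ2.u_fold)
next
  case (u_unfold D G M' A) then show ?case by (metis typ2.u_unfold)
qed auto

lemma sr_m2: "typ2 D G t T \<Longrightarrow> t = TMatch (TInj2 P) M1 M2 \<Longrightarrow> typ2 D G (subst M2 0 P) T"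
proof (induct rule: typ2.induct)
  case (u_match D G P' A B M C N)
  from u_match(7) have e: "P' = TInj2 P" "M = M1" "N = M2" by auto
  have "typ2 D G P B" using inv_inj2[OF u_match(1) e(1)] by auto
  moreover have "typ2 D (B # G) M2 C" using u_match(5) e(3) by simp
  ultimately show ?case by (intro typ2_subst[of D "B # G" M2 C 0 G B P]) auto
next
  case (u_fold D G M' A) then show ?case by (metis typ2.u_fold)
next
  case (u_unfold D G M' A) then show ?case by (metis typ2.u_unfold)
qed auto

lemma typ2_root_base: "base_red R R' \<Longrightarrow> typ2 D G R T \<Longrightarrow> typ2 D G R' T"
proof (induct rule: base_red.induct)
  case 1 then show ?case by (rule sr_beta[OF _ refl])
next
  case 2 then show ?case by (rule sr_fst[OF _ refl])
next
  case 3 then show ?case by (rule sr_snd[OF _ refl])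
next
  case 4 then show ?case by (rule sr_let[OF _ refl])
next
  case 5 then show ?case by (rule sr_split[OF _ refl])
next
  case 6 then show ?case by (rule sr_m1[OF _ refl])
next
  case 7 then show ?case by (rule sr_m2[OF _ refl])
next
  case 8 then show ?case by (rule sr_Y[OF _ refl])
qed


lemma typ2_root_bool: "bool_red R R' \<Longrightarrow> typ2 D G R T \<Longrightarrow> typ2 D G R' T"
proof (induct rule: bool_red.induct)
  case 1 then show ?case by (rule sr_ift[OF _ refl])
next
  case 2 then show ?case by (rule sr_iff[OF _ refl])
next
  case 3 then show ?case using sr_not[OF _ refl] by blast
next
  case 4 then show ?case using sr_and[OF _ refl] by blast
next
  case 5 then show ?case using sr_xor[OF _ refl] by blast
qed

lemma typ2_root: "typ2 D G R T \<Longrightarrow> base_red R R' \<or> bool_red R R' \<Longrightarrow> typ2 D G R' T"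
  using typ2_root_base typ2_root_bool by blast

lemma typ2_plug: "typ2 D G t T \<Longrightarrow> t = plug E R \<Longrightarrow> (\<forall>G T. typ2 D G R T \<longrightarrow> typ2 D G R' T) \<Longrightarrow>
  typ2 D G (plug E R') T"
proof (induct arbitrary: E rule: typ2.induct)
  case (u_fold D G M A) then show ?case by (auto intro: typ2.u_fold)
next
  case (u_unfold D G M A) then show ?case by (auto intro: typ2.u_unfold)
next
  case u_fv then show ?case by (cases E) (simp_all, (blast intro: typ2.u_fv)+)
next
  case u_var then show ?case by (cases E) (simp_all, (blast intro: typ2.u_var)+)
next
  case u_lam then show ?case by (cases E) (simp_all, (blast intro: typ2.u_lam)+)
next
  case u_app then show ?case by (cases E) (simp_all, (blast intro: typ2.u_app)+)
next
  case u_pair then show ?case by (cases E) (simp_all, (blast intro: typ2.u_pair)+)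
next
  case u_fst then show ?case by (cases E) (simp_all, (blast intro: typ2.u_fst)+)
next
  case u_snd then show ?case by (cases E) (simp_all, (blast intro: typ2.u_snd)+)
next
  case u_skip then show ?case by (cases E) (simp_all, (blast intro: typ2.u_skip)+)
next
  case u_letskip then show ?case by (cases E) (simp_all, (blast intro: typ2.u_letskip)+)
next
  case u_tt then show ?case by (cases E) (simp_all, (blast intro: typ2.u_tt)+)
next
  case u_ff then show ?case by (cases E) (simp_all, (blast intro: typ2.u_ff)+)
next
  case u_if then show ?case by (cases E) (simp_all, (blast intro: typ2.u_if)+)
next
  case u_and then show ?case by (cases E) (simp_all, (blast intro: typ2.u_and)+)
next
  case u_xor then show ?case by (cases E) (simp_all, (blast intro: typ2.u_xor)+)
next
  case u_not then show ?case by (cases E) (simp_all, (blast intro: typ2.u_not)+)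
next
  case u_inj1 then show ?case by (cases E) (simp_all, (blast intro: typ2.u_inj1)+)
next
  case u_inj2 then show ?case by (cases E) (simp_all, (blast intro: typ2.u_inj2)+)
next
  case u_match then show ?case by (cases E) (simp_all, (blast intro: typ2.u_match)+)
next
  case u_split then show ?case by (cases E) (simp_all, (blast intro: typ2.u_split)+)
next
  case u_Y then show ?case by (cases E) (simp_all, (blast intro: typ2.u_Y)+)
next
  case u_err then show ?case by (cases E) (simp_all, (blast intro: typ2.u_err)+)
qed

lemma typ2_step: "step t t' \<Longrightarrow> typ2 D G t T \<Longrightarrow> typ2 D G t' T"
  by (induct rule: step.induct) (auto intro: typ2_plug typ2_root)

lemma typ2_steps: "step\<^sup>*\<^sup>* t t' \<Longrightarrow> typ2 D G t T \<Longrightarrow> typ2 D G t' T"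
  by (induct rule: rtranclp_induct) (auto intro: typ2_step)

lemma typ2_tuple: "typ2 D G (tuple (map bconst xs)) T \<Longrightarrow> T = bitpow (length xs)"
proof (induct xs arbitrary: T rule: induct_list012)
  case 1 then show ?case using inv_skip by fastforce
next
  case (2 x) then show ?case using inv_bool by (cases x) (auto simp: bconst_def)
next
  case (3 x y zs)
  from inv_pair[OF 3(3)[simplified]] obtain A B where "T = Prod A B" "typ2 D G (bconst x) A"
     "typ2 D G (tuple (map bconst (y # zs))) B" by auto
  moreover have "A = Bit" using \<open>typ2 D G (bconst x) A\<close> inv_bool by (cases x) (auto simp: bconst_def)
  ultimately show ?case using 3(2) by simp
qed

lemma bitpow_inj: "bitpow a = bitpow b \<Longrightarrow> a = b"
proof (induct a arbitrary: b rule: bitpow.induct)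
  case 1 then show ?case by (cases b rule: bitpow.cases) auto
next
  case 2 then show ?case by (cases b rule: bitpow.cases) auto
next
  case (3 k) then show ?case by (cases b rule: bitpow.cases) auto
qed


lemma close_subst: "lift 0 s = s \<Longrightarrow> subst (close x d t) d s = subst_fv (TFV(x := s)) t"
  by (induct t arbitrary: d) auto

lemma sfv_close: "g i = TFV i \<Longrightarrow> (\<forall>y d. y \<noteq> i \<longrightarrow> close i d (g y) = g y) \<Longrightarrow>
  subst_fv g (close i d t) = close i d (subst_fv g t)"
  by (induct t arbitrary: d) auto

lemma sfv_mklet: "g i = TFV i \<Longrightarrow> (\<forall>y d. y \<noteq> i \<longrightarrow> close i d (g y) = g y) \<Longrightarrow>
  subst_fv g (mklet i N acc) = mklet i (subst_fv g N) (subst_fv g acc)"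
  by (simp add: mklet_def sfv_close)

lemma sfv_snd_pow: "subst_fv g ((TSnd ^^ k) z) = (TSnd ^^ k) (subst_fv g z)"
  by (induct k) auto

lemma fvars_snd_pow: "fvars ((TSnd ^^ k) z) = fvars z"
  by (induct k) auto

lemma sfv_proj: "subst_fv g (proj n i z) = proj n i (subst_fv g z)"
  by (simp add: proj_def sfv_snd_pow)

lemma fvars_proj: "fvars (proj n i z) = fvars z"
  by (simp add: proj_def fvars_snd_pow)

lemma snd_steps: "k < length xs \<Longrightarrow> step\<^sup>*\<^sup>* ((TSnd ^^ k) (tuple xs)) (tuple (drop k xs))"
proof (induct k)
  case 0 then show ?case by simp
next
  case (Suc k)
  then have ih: "step\<^sup>*\<^sup>* ((TSnd ^^ k) (tuple xs)) (tuple (drop k xs))" by simp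
  have d: "drop k xs = xs ! k # xs ! Suc k # drop (Suc (Suc k)) xs"
    using Suc(2) by (metis Cons_nth_drop_Suc Suc_lessD)
  have d2: "drop (Suc k) xs = xs ! Suc k # drop (Suc (Suc k)) xs"
    using Suc(2) by (metis Cons_nth_drop_Suc)
  have "step\<^sup>*\<^sup>* (TSnd (tuple (drop k xs))) (tuple (drop (Suc k) xs))"
    unfolding d d2 by (rule steps_root) (auto intro: base_red.intros)
  then show ?case using sc_snd[OF ih] by simp
qed

lemma proj_steps: "length bs = n \<Longrightarrow> 1 \<le> i \<Longrightarrow> i \<le> n \<Longrightarrow>
  step\<^sup>*\<^sup>* (proj n i (tuple (map bconst bs))) (bconst (bs ! (i - 1)))"
proof (cases "i = n")
  case True
  assume a: "length bs = n" "1 \<le> i" "i \<le> n"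
  let ?L = "map bconst bs"
  have n1: "n - 1 < length ?L" "Suc (n - 1) = n" using a by auto
  have "drop (n - 1) ?L = [?L ! (n - 1)]"
    using Cons_nth_drop_Suc[OF n1(1)] n1(2) a(1) by simp
  then have "step\<^sup>*\<^sup>* ((TSnd ^^ (n - 1)) (tuple ?L)) (bconst (bs ! (n - 1)))"
    using snd_steps[of "n - 1" ?L] a by simp
  then show ?thesis using True by (simp add: proj_def)
next
  case False
  assume a: "length bs = n" "1 \<le> i" "i \<le> n"
  let ?L = "map bconst bs"
  have d: "drop (i - 1) ?L = ?L ! (i - 1) # ?L ! i # drop (Suc i) ?L" using a False
    by (metis Cons_nth_drop_Suc One_nat_def Suc_pred le_less_trans le_neq_implies_less length_map less_Suc_eq_le less_imp_diff_less less_numeral_extra(1) order_less_le_trans)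
  have "step\<^sup>*\<^sup>* ((TSnd ^^ (i - 1)) (tuple ?L)) (tuple (drop (i - 1) ?L))"
    using snd_steps[of "i - 1" ?L] a False by simp
  then have s1: "step\<^sup>*\<^sup>* (TFst ((TSnd ^^ (i - 1)) (tuple ?L))) (TFst (tuple (drop (i - 1) ?L)))"
    by (rule sc_fst)
  have "step\<^sup>*\<^sup>* (TFst (tuple (drop (i - 1) ?L))) (?L ! (i - 1))"
    unfolding d by (rule steps_root) (auto intro: base_red.intros)
  then show ?thesis using s1 False a by (simp add: proj_def)
qed

lemma mklet_step: "lift 0 c = c \<Longrightarrow> step\<^sup>*\<^sup>* (mklet x c B) (subst_fv (TFV(x := c)) B)"
proof -
  assume l: "lift 0 c = c"
  have "step\<^sup>*\<^sup>* (TApp (TLam (close x 0 B)) c) (subst (close x 0 B) 0 c)"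
    by (rule steps_root) (auto intro: base_red.intros)
  then show ?thesis by (simp add: mklet_def close_subst[OF l])
qed

lemma nf_bconst_tuple: "nf_val (tuple (map bconst bs))"
  by (rule nf_val_tuple_bconst)

lemma sfv_foldr_proj: "\<forall>j\<in>set js. j \<noteq> i \<Longrightarrow> nf_val c \<Longrightarrow> nf_val T \<Longrightarrow>
  subst_fv (TFV(i := c)) (foldr (\<lambda>j acc. mklet j (proj n j T) acc) js M) =
  foldr (\<lambda>j acc. mklet j (proj n j T) acc) js (subst_fv (TFV(i := c)) M)"
proof (induct js)
  case Nil then show ?case by simp
next
  case (Cons j js)
  have c1: "(TFV(i := c)) j = TFV j" using Cons by auto
  have c2: "\<forall>y d. y \<noteq> j \<longrightarrow> close j d ((TFV(i := c)) y) = (TFV(i := c)) y"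
    using Cons(3) nf_val_props by auto
  have p: "subst_fv (TFV(i := c)) (proj n j T) = proj n j T"
    by (simp add: sfv_proj nf_val_props[OF Cons(4)])
  show ?case using Cons sfv_mklet[OF c1 c2] p by (simp add: fun_upd_def)
qed

lemma foldr_steps: "set js \<subseteq> {1..n} \<Longrightarrow> distinct js \<Longrightarrow> length bs = n \<Longrightarrow>
  step\<^sup>*\<^sup>* (foldr (\<lambda>j acc. mklet j (proj n j (tuple (map bconst bs))) acc) js M)
         (subst_fv (\<lambda>x. if x \<in> set js then bconst (bs ! (x - 1)) else TFV x) M)"
proof (induct js arbitrary: M)
  case Nil then show ?case by (simp add: sfv_id)
next
  case (Cons i js)
  let ?T = "tuple (map bconst bs)"
  let ?F = "\<lambda>M. foldr (\<lambda>j acc. mklet j (proj n j ?T) acc) js M"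
  let ?c = "bconst (bs ! (i - 1))"
  have i: "1 \<le> i" "i \<le> n" using Cons by auto
  have s1: "step\<^sup>*\<^sup>* (proj n i ?T) ?c" using proj_steps[OF Cons(4) i] .
  have A: "step\<^sup>*\<^sup>* (mklet i (proj n i ?T) (?F M)) (mklet i ?c (?F M))"
    unfolding mklet_def by (rule sc_app) (use s1 in auto)
  have B: "step\<^sup>*\<^sup>* (mklet i ?c (?F M)) (subst_fv (TFV(i := ?c)) (?F M))"
    using mklet_step[of ?c i "?F M"] by simp
  have C: "subst_fv (TFV(i := ?c)) (?F M) = ?F (subst_fv (TFV(i := ?c)) M)"
    using sfv_foldr_proj[of js i ?c ?T n M] Cons(3) nf_val_tuple_bconst by auto
  have D: "step\<^sup>*\<^sup>* (?F (subst_fv (TFV(i := ?c)) M))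
      (subst_fv (\<lambda>x. if x \<in> set js then bconst (bs ! (x - 1)) else TFV x) (subst_fv (TFV(i := ?c)) M))"
    using Cons by auto
  have E: "subst_fv (\<lambda>x. if x \<in> set js then bconst (bs ! (x - 1)) else TFV x) (subst_fv (TFV(i := ?c)) M)
     = subst_fv (\<lambda>x. if x \<in> set (i # js) then bconst (bs ! (x - 1)) else TFV x) M"
    unfolding sfv_comp using Cons(3) by (intro sfv_cong) auto
  have "step\<^sup>*\<^sup>* (mklet i (proj n i ?T) (?F M))
     (subst_fv (\<lambda>x. if x \<in> set (i # js) then bconst (bs ! (x - 1)) else TFV x) M)"
    using rtranclp_trans[OF A rtranclp_trans[OF B]] C D E by simp
  then show ?case by simp
qed

lemma let_tuple_steps: "length bs = n \<Longrightarrow> 0 \<notin> set (fvars M) \<Longrightarrow>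
  step\<^sup>*\<^sup>* (let_tuple n bs M) (subst_fv (\<lambda>x. if 1 \<le> x \<and> x \<le> n then bconst (bs ! (x - 1)) else TFV x) M)"
proof -
  assume a: "length bs = n" "0 \<notin> set (fvars M)"
  let ?T = "tuple (map bconst bs)"
  let ?B = "foldr (\<lambda>i acc. mklet i (proj n i (TFV 0)) acc) [1..<Suc n] M"
  have l: "lift 0 ?T = ?T" using nf_val_props[OF nf_val_tuple_bconst] by blast
  have s1: "step\<^sup>*\<^sup>* (let_tuple n bs M) (subst_fv (TFV(0 := ?T)) ?B)"
    unfolding let_tuple_def using mklet_step[OF l, of 0 ?B] by simp
  have "\<forall>js. set js \<subseteq> {1..n} \<longrightarrow> subst_fv (TFV(0 := ?T)) (foldr (\<lambda>i acc. mklet i (proj n i (TFV 0)) acc) js M)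
     = foldr (\<lambda>i acc. mklet i (proj n i ?T) acc) js M"
  proof
    fix js show "set js \<subseteq> {1..n} \<longrightarrow> subst_fv (TFV(0 := ?T)) (foldr (\<lambda>i acc. mklet i (proj n i (TFV 0)) acc) js M)
     = foldr (\<lambda>i acc. mklet i (proj n i ?T) acc) js M"
    proof (induct js)
      case Nil then show ?case using a(2) by (auto intro: sfv_id)
    next
      case (Cons j js)
      show ?case
      proof
        assume s: "set (j # js) \<subseteq> {1..n}"
        then have c1: "(TFV(0 := ?T)) j = TFV j" by auto
        have c2: "\<forall>y d. y \<noteq> j \<longrightarrow> close j d ((TFV(0 := ?T)) y) = (TFV(0 := ?T)) y"
          using nf_val_props[OF nf_val_tuple_bconst] s by auto
        show "subst_fv (TFV(0 := ?T)) (foldr (\<lambda>i acc. mklet i (proj n i (TFV 0)) acc) (j # js) M)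
            = foldr (\<lambda>i acc. mklet i (proj n i ?T) acc) (j # js) M"
          using Cons s sfv_mklet[OF c1 c2] by (simp add: sfv_proj fun_upd_def)
      qed
    qed
  qed
  moreover have "set [1..<Suc n] \<subseteq> {1..n}" by auto
  ultimately have e: "subst_fv (TFV(0 := ?T)) ?B = foldr (\<lambda>i acc. mklet i (proj n i ?T) acc) [1..<Suc n] M"
    by blast
  have s2: "step\<^sup>*\<^sup>* (foldr (\<lambda>i acc. mklet i (proj n i ?T) acc) [1..<Suc n] M)
     (subst_fv (\<lambda>x. if x \<in> set [1..<Suc n] then bconst (bs ! (x - 1)) else TFV x) M)"
    by (rule foldr_steps) (use a in auto)
  have e2: "(\<lambda>x. if x \<in> set [1..<Suc n] then bconst (bs ! (x - 1)) else TFV x) =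
     (\<lambda>x. if 1 \<le> x \<and> x \<le> n then bconst (bs ! (x - 1)) else TFV x)" by auto
  show ?thesis using rtranclp_trans[OF s1] s2 e e2 by simp
qed


section \<open>Circuits\<close>

lemma run_cons: "run_circuit I (g # C) u = exec_gate g (run_circuit I C u)"
  by (simp add: run_circuit_def)

lemma run_append: "run_circuit I (G @ C) u = foldr exec_gate G (run_circuit I C u)"
  by (simp add: run_circuit_def)

lemma exec_other: "j \<noteq> i \<Longrightarrow> exec_gate (Cnot i cs) v j = v j"
  by simp

lemma wires_cons: "wires (g # C) = gate_wires g \<union> wires C"
  by (simp add: wires_def)

lemma wires_append: "wires (G @ C) = wires G \<union> wires C"
  by (simp add: wires_def)

lemma run_fresh: "w \<notin> I \<Longrightarrow> w \<notin> wires C \<Longrightarrow> run_circuit I C u w = False"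
proof (induct C)
  case Nil then show ?case by (simp add: run_circuit_def)
next
  case (Cons g C)
  obtain i cs where g: "g = Cnot i cs" by (cases g)
  have "w \<noteq> i" "w \<notin> wires C" using Cons(3) g by (auto simp: wires_cons)
  then show ?case using Cons g by (simp add: run_cons)
qed

lemma new_wire_fresh: "new_wire I C L w \<Longrightarrow> run_circuit I C u w = False"
  by (simp add: new_wire_def run_fresh)

lemma if_gates_cons: "if_gates p ((a, b, c) # trs) = Cnot a [(True, p), (True, b)] # Cnot a [(False, p), (True, c)] # if_gates p trs"
  by (simp add: if_gates_def)

lemma if_gates_run: "distinct (map fst trs) \<Longrightarrow> wp \<notin> fst ` set trs \<Longrightarrow>
  (\<forall>(a, b, c) \<in> set trs. b \<notin> fst ` set trs \<and> c \<notin> fst ` set trs) \<Longrightarrow>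
  foldr exec_gate (if_gates wp trs) v x =
   (case map_of trs x of Some (b, c) \<Rightarrow> (v x \<noteq> (if v wp then v b else v c)) | None \<Rightarrow> v x)"
proof (induct trs arbitrary: x)
  case Nil then show ?case by (simp add: if_gates_def)
next
  case (Cons t trs)
  obtain a b c where t: "t = (a, b, c)" by (cases t) auto
  let ?v0 = "foldr exec_gate (if_gates wp trs) v"
  have h1: "distinct (map fst trs)" "wp \<notin> fst ` set trs"
    "\<forall>(a, b, c) \<in> set trs. b \<notin> fst ` set trs \<and> c \<notin> fst ` set trs"
    using Cons(2-4) by auto
  have ih: "\<And>y. ?v0 y = (case map_of trs y of Some (b, c) \<Rightarrow> (v y \<noteq> (if v wp then v b else v c)) | None \<Rightarrow> v y)"
    using Cons(1)[OF h1] by blast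
  have na: "a \<notin> fst ` set trs" using Cons(2) t by auto
  have nwp: "wp \<notin> fst ` set trs" "wp \<noteq> a" using Cons(3) t by auto
  have nb: "b \<notin> fst ` set trs" "b \<noteq> a" "c \<notin> fst ` set trs" "c \<noteq> a" using Cons(4) t by auto
  have "map_of trs a = None" using na by (simp add: map_of_eq_None_iff)
  then have v0a: "?v0 a = v a" using ih[of a] by simp
  have "map_of trs wp = None" using nwp by (simp add: map_of_eq_None_iff)
  then have v0wp: "?v0 wp = v wp" using ih[of wp] by simp
  have "map_of trs b = None" using nb by (simp add: map_of_eq_None_iff)
  then have v0b: "?v0 b = v b" using ih[of b] by simp
  have "map_of trs c = None" using nb by (simp add: map_of_eq_None_iff)
  then have v0c: "?v0 c = v c" using ih[of c] by simp
  show ?case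
  proof (cases "x = a")
    case True
    then show ?thesis using t v0a v0wp v0b v0c nwp nb by (simp add: if_gates_cons)
  next
    case False
    then show ?thesis using t ih[of x] by (simp add: if_gates_cons)
  qed
qed


lemma map_app_split: "length a = length c \<Longrightarrow> map f (a @ b) = map g (c @ d) \<Longrightarrow> map f a = map g c \<and> map f b = map g d"
  by (simp add: append_eq_append_conv)

lemma shape_len: "shape U = shape V \<Longrightarrow> length (fvars U) = length (fvars V)"
proof (induct U arbitrary: V)
  case (TVar k) then show ?case by (cases V) (auto simp: shape_def)
next
  case (TFV x) then show ?case by (cases V) (auto simp: shape_def)
next
  case (TSkip) then show ?case by (cases V) (auto simp: shape_def)
next
  case (Tt) then show ?case by (cases V) (auto simp: shape_def)
next
  case (Ff) then show ?case by (cases V) (auto simp: shape_def)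
next
  case (TAnd) then show ?case by (cases V) (auto simp: shape_def)
next
  case (TXor) then show ?case by (cases V) (auto simp: shape_def)
next
  case (TNot) then show ?case by (cases V) (auto simp: shape_def)
next
  case (TSplit) then show ?case by (cases V) (auto simp: shape_def)
next
  case (TErr) then show ?case by (cases V) (auto simp: shape_def)
next
  case (TLam U1)
  obtain V1 where V: "V = TLam V1" "shape U1 = shape V1" using TLam.prems(1) by (cases V) (auto simp: shape_def)
  show ?case using V TLam.hyps(1)[OF V(2)] by simp
next
  case (TFst U1)
  obtain V1 where V: "V = TFst V1" "shape U1 = shape V1" using TFst.prems(1) by (cases V) (auto simp: shape_def)
  show ?case using V TFst.hyps(1)[OF V(2)] by simp
next
  case (TSnd U1)
  obtain V1 where V: "V = TSnd V1" "shape U1 = shape V1" using TSnd.prems(1) by (cases V) (auto simp: shape_def)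
  show ?case using V TSnd.hyps(1)[OF V(2)] by simp
next
  case (TInj1 U1)
  obtain V1 where V: "V = TInj1 V1" "shape U1 = shape V1" using TInj1.prems(1) by (cases V) (auto simp: shape_def)
  show ?case using V TInj1.hyps(1)[OF V(2)] by simp
next
  case (TInj2 U1)
  obtain V1 where V: "V = TInj2 V1" "shape U1 = shape V1" using TInj2.prems(1) by (cases V) (auto simp: shape_def)
  show ?case using V TInj2.hyps(1)[OF V(2)] by simp
next
  case (TY U1)
  obtain V1 where V: "V = TY V1" "shape U1 = shape V1" using TY.prems(1) by (cases V) (auto simp: shape_def)
  show ?case using V TY.hyps(1)[OF V(2)] by simp
next
  case (TApp U1 U2)
  obtain V1 V2 where V: "V = TApp V1 V2" "shape U1 = shape V1" "shape U2 = shape V2" using TApp.prems(1) by (cases V) (auto simp: shape_def)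
  show ?case using V TApp.hyps(1)[OF V(2)] TApp.hyps(2)[OF V(3)] by simp
next
  case (TPair U1 U2)
  obtain V1 V2 where V: "V = TPair V1 V2" "shape U1 = shape V1" "shape U2 = shape V2" using TPair.prems(1) by (cases V) (auto simp: shape_def)
  show ?case using V TPair.hyps(1)[OF V(2)] TPair.hyps(2)[OF V(3)] by simp
next
  case (TLetSkip U1 U2)
  obtain V1 V2 where V: "V = TLetSkip V1 V2" "shape U1 = shape V1" "shape U2 = shape V2" using TLetSkip.prems(1) by (cases V) (auto simp: shape_def)
  show ?case using V TLetSkip.hyps(1)[OF V(2)] TLetSkip.hyps(2)[OF V(3)] by simp
next
  case (TIf U1 U2 U3)
  obtain V1 V2 V3 where V: "V = TIf V1 V2 V3" "shape U1 = shape V1" "shape U2 = shape V2" "shape U3 = shape V3" using TIf.prems(1) by (cases V) (auto simp: shape_def)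
  show ?case using V TIf.hyps(1)[OF V(2)] TIf.hyps(2)[OF V(3)] TIf.hyps(3)[OF V(4)] by simp
next
  case (TMatch U1 U2 U3)
  obtain V1 V2 V3 where V: "V = TMatch V1 V2 V3" "shape U1 = shape V1" "shape U2 = shape V2" "shape U3 = shape V3" using TMatch.prems(1) by (cases V) (auto simp: shape_def)
  show ?case using V TMatch.hyps(1)[OF V(2)] TMatch.hyps(2)[OF V(3)] TMatch.hyps(3)[OF V(4)] by simp
qed

lemma shape_sfv: "shape U = shape V \<Longrightarrow> map f (fvars U) = map g (fvars V) \<Longrightarrow> subst_fv f U = subst_fv g V"
proof (induct U arbitrary: V)
  case (TVar k) then show ?case by (cases V) (auto simp: shape_def)
next
  case (TFV x) then show ?case by (cases V) (auto simp: shape_def)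
next
  case (TSkip) then show ?case by (cases V) (auto simp: shape_def)
next
  case (Tt) then show ?case by (cases V) (auto simp: shape_def)
next
  case (Ff) then show ?case by (cases V) (auto simp: shape_def)
next
  case (TAnd) then show ?case by (cases V) (auto simp: shape_def)
next
  case (TXor) then show ?case by (cases V) (auto simp: shape_def)
next
  case (TNot) then show ?case by (cases V) (auto simp: shape_def)
next
  case (TSplit) then show ?case by (cases V) (auto simp: shape_def)
next
  case (TErr) then show ?case by (cases V) (auto simp: shape_def)
next
  case (TLam U1)
  obtain V1 where V: "V = TLam V1" "shape U1 = shape V1" using TLam.prems(1) by (cases V) (auto simp: shape_def)
  show ?case using V TLam.prems(2) TLam.hyps(1)[OF V(2)] by simp
next
  case (TFst U1)
  obtain V1 where V: "V = TFst V1" "shape U1 = shape V1" using TFst.prems(1) by (cases V) (auto simp: shape_def)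
  show ?case using V TFst.prems(2) TFst.hyps(1)[OF V(2)] by simp
next
  case (TSnd U1)
  obtain V1 where V: "V = TSnd V1" "shape U1 = shape V1" using TSnd.prems(1) by (cases V) (auto simp: shape_def)
  show ?case using V TSnd.prems(2) TSnd.hyps(1)[OF V(2)] by simp
next
  case (TInj1 U1)
  obtain V1 where V: "V = TInj1 V1" "shape U1 = shape V1" using TInj1.prems(1) by (cases V) (auto simp: shape_def)
  show ?case using V TInj1.prems(2) TInj1.hyps(1)[OF V(2)] by simp
next
  case (TInj2 U1)
  obtain V1 where V: "V = TInj2 V1" "shape U1 = shape V1" using TInj2.prems(1) by (cases V) (auto simp: shape_def)
  show ?case using V TInj2.prems(2) TInj2.hyps(1)[OF V(2)] by simp
next
  case (TY U1)
  obtain V1 where V: "V = TY V1" "shape U1 = shape V1" using TY.prems(1) by (cases V) (auto simp: shape_def)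
  show ?case using V TY.prems(2) TY.hyps(1)[OF V(2)] by simp
next
  case (TApp U1 U2)
  obtain V1 V2 where V: "V = TApp V1 V2" "shape U1 = shape V1" "shape U2 = shape V2" using TApp.prems(1) by (cases V) (auto simp: shape_def)
  have l: "length (fvars U1) = length (fvars V1)" using shape_len[OF V(2)] .
  have m: "map f (fvars U1) = map g (fvars V1) \<and> map f (fvars U2) = map g (fvars V2)"
    using map_app_split[OF l] TApp.prems(2) V by simp
  show ?case using V m TApp.hyps(1)[OF V(2)] TApp.hyps(2)[OF V(3)] by simp
next
  case (TPair U1 U2)
  obtain V1 V2 where V: "V = TPair V1 V2" "shape U1 = shape V1" "shape U2 = shape V2" using TPair.prems(1) by (cases V) (auto simp: shape_def)
  have l: "length (fvars U1) = length (fvars V1)" using shape_len[OF V(2)] .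
  have m: "map f (fvars U1) = map g (fvars V1) \<and> map f (fvars U2) = map g (fvars V2)"
    using map_app_split[OF l] TPair.prems(2) V by simp
  show ?case using V m TPair.hyps(1)[OF V(2)] TPair.hyps(2)[OF V(3)] by simp
next
  case (TLetSkip U1 U2)
  obtain V1 V2 where V: "V = TLetSkip V1 V2" "shape U1 = shape V1" "shape U2 = shape V2" using TLetSkip.prems(1) by (cases V) (auto simp: shape_def)
  have l: "length (fvars U1) = length (fvars V1)" using shape_len[OF V(2)] .
  have m: "map f (fvars U1) = map g (fvars V1) \<and> map f (fvars U2) = map g (fvars V2)"
    using map_app_split[OF l] TLetSkip.prems(2) V by simp
  show ?case using V m TLetSkip.hyps(1)[OF V(2)] TLetSkip.hyps(2)[OF V(3)] by simp
next
  case (TIf U1 U2 U3)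
  obtain V1 V2 V3 where V: "V = TIf V1 V2 V3" "shape U1 = shape V1" "shape U2 = shape V2" "shape U3 = shape V3" using TIf.prems(1) by (cases V) (auto simp: shape_def)
  have l: "length (fvars U1) = length (fvars V1)" using shape_len[OF V(2)] .
  have l2: "length (fvars U2) = length (fvars V2)" using shape_len[OF V(3)] .
  have p: "map f (fvars U1 @ (fvars U2 @ fvars U3)) = map g (fvars V1 @ (fvars V2 @ fvars V3))"
    using TIf.prems(2) V by simp
  have m: "map f (fvars U1) = map g (fvars V1) \<and> map f (fvars U2 @ fvars U3) = map g (fvars V2 @ fvars V3)"
    using map_app_split[OF l p] .
  have m2: "map f (fvars U2) = map g (fvars V2) \<and> map f (fvars U3) = map g (fvars V3)"
    using map_app_split[OF l2] m by blast
  show ?case using V m m2 TIf.hyps(1)[OF V(2)] TIf.hyps(2)[OF V(3)] TIf.hyps(3)[OF V(4)] by simp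
next
  case (TMatch U1 U2 U3)
  obtain V1 V2 V3 where V: "V = TMatch V1 V2 V3" "shape U1 = shape V1" "shape U2 = shape V2" "shape U3 = shape V3" using TMatch.prems(1) by (cases V) (auto simp: shape_def)
  have l: "length (fvars U1) = length (fvars V1)" using shape_len[OF V(2)] .
  have l2: "length (fvars U2) = length (fvars V2)" using shape_len[OF V(3)] .
  have p: "map f (fvars U1 @ (fvars U2 @ fvars U3)) = map g (fvars V1 @ (fvars V2 @ fvars V3))"
    using TMatch.prems(2) V by simp
  have m: "map f (fvars U1) = map g (fvars V1) \<and> map f (fvars U2 @ fvars U3) = map g (fvars V2 @ fvars V3)"
    using map_app_split[OF l p] .
  have m2: "map f (fvars U2) = map g (fvars V2) \<and> map f (fvars U3) = map g (fvars V3)"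
    using map_app_split[OF l2] m by blast
  show ?case using V m m2 TMatch.hyps(1)[OF V(2)] TMatch.hyps(2)[OF V(3)] TMatch.hyps(3)[OF V(4)] by simp
qed


definition sig :: "nat set \<Rightarrow> gate list \<Rightarrow> (nat \<Rightarrow> nat option) \<Rightarrow> (nat \<Rightarrow> bool) \<Rightarrow> nat \<Rightarrow> trm" where
  "sig I C L u x = (case L x of Some w \<Rightarrow> bconst (run_circuit I C u w) | None \<Rightarrow> TFV x)"

lemma readback_sig: "readback M I C L u = subst_fv (sig I C L u) M"
  by (simp add: readback_def Let_def sig_def[abs_def])

lemma goodf_sig: "goodf (sig I C L u)"
  by (auto simp: goodf_def sig_def split: option.split)

lemma sig_Some: "L x = Some w \<Longrightarrow> sig I C L u x = bconst (run_circuit I C u w)"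
  by (simp add: sig_def)

definition rbrel :: "trm \<Rightarrow> trm \<Rightarrow> bool" where
  "rbrel a a' \<longleftrightarrow> a = a' \<or> (\<exists>E R R'. a = plug E R \<and> a' = plug E R' \<and> (base_red R R' \<or> bool_red R R'))
     \<or> (\<exists>E X. a = plug E X \<and> a' = plug E TErr)"

lemma rbrel_sim: assumes "rbrel a a'" "approx a r" shows "\<exists>r'. step\<^sup>*\<^sup>* r r' \<and> approx a' r'"
proof -
  consider "a = a'" | E R R' where "a = plug E R" "a' = plug E R'" "base_red R R' \<or> bool_red R R'"
    | E X where "a = plug E X" "a' = plug E TErr"
    using assms(1) unfolding rbrel_def by blast
  then show ?thesis
  proof cases
    case 1 then show ?thesis using assms(2) by blast
  next
    case (2 E R R')
    then obtain E' Y where p: "r = plug E' Y" "approx R Y" "\<forall>X' Y'. approx X' Y' \<longrightarrow> approx (plug E X') (plug E' Y')"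
      using approx_plug assms(2) by blast
    obtain Y' where "base_red Y Y' \<or> bool_red Y Y'" "approx R' Y'" using approx_redex[OF 2(3) p(2)] by blast
    then show ?thesis using p 2 step.intros[of Y Y' E'] by blast
  next
    case (3 E X)
    then obtain E' Y where p: "r = plug E' Y" "approx X Y" "\<forall>X' Y'. approx X' Y' \<longrightarrow> approx (plug E X') (plug E' Y')"
      using approx_plug assms(2) by blast
    then show ?thesis using 3 approx.a_err by blast
  qed
qed

lemma base_red_sfv: "base_red R R' \<Longrightarrow> goodf f \<Longrightarrow> base_red (subst_fv f R) (subst_fv f R')"
  by (induct rule: base_red.induct) (auto simp: sfv_subst_good intro: base_red.intros)

lemma base_red_fvars: "base_red R R' \<Longrightarrow> set (fvars R') \<subseteq> set (fvars R)"
  by (induct rule: base_red.induct) (use fvars_subst in fastforce)+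

lemma rb_plug: "readback (plug E X) I C L u = plug (ctx_sfv (sig I C L u) E) (subst_fv (sig I C L u) X)"
  by (simp add: readback_sig sfv_plug)

lemma ctx_agree: "set (fvars (plug E X)) \<subseteq> dom L \<Longrightarrow> (\<forall>x\<in>dom L. f' x = f x) \<Longrightarrow> ctx_sfv f' E = ctx_sfv f E"
  by (rule ctx_sfv_cong) (use fvars_plug in blast)

lemma sig_agree: "(\<forall>x\<in>dom L. L' x = L x) \<Longrightarrow> (\<forall>y. y \<notin> T \<longrightarrow> run_circuit I C' u y = run_circuit I C u y) \<Longrightarrow>
   T \<inter> ran L = {} \<Longrightarrow> \<forall>x\<in>dom L. sig I C' L' u x = sig I C L u x"
proof
  fix x assume a: "\<forall>x\<in>dom L. L' x = L x" "\<forall>y. y \<notin> T \<longrightarrow> run_circuit I C' u y = run_circuit I C u y"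
    "T \<inter> ran L = {}" "x \<in> dom L"
  then obtain wx where "L x = Some wx" by auto
  moreover then have "wx \<in> ran L" by (auto simp: ran_def)
  ultimately show "sig I C' L' u x = sig I C L u x" using a by (auto simp: sig_def)
qed

lemma fvars_plug_sub: "set (fvars (plug E X)) \<subseteq> D \<Longrightarrow> set (fvars Y) \<subseteq> D' \<Longrightarrow> D \<subseteq> D' \<Longrightarrow>
  set (fvars (plug E Y)) \<subseteq> D'"
  using fvars_plug[of E X] fvars_plug[of E Y] by blast

lemma sim_base: "base_red R R' \<Longrightarrow> set (fvars (plug E R)) \<subseteq> dom L \<Longrightarrow>
  set (fvars (plug E R')) \<subseteq> dom L \<and> rbrel (readback (plug E R) I C L u) (readback (plug E R') I C L u)"
proof
  assume a: "base_red R R'" "set (fvars (plug E R)) \<subseteq> dom L"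
  show "set (fvars (plug E R')) \<subseteq> dom L"
    using fvars_plug[of E R] fvars_plug[of E R'] base_red_fvars[OF a(1)] a(2) by blast
  show "rbrel (readback (plug E R) I C L u) (readback (plug E R') I C L u)"
    unfolding rb_plug rbrel_def using base_red_sfv[OF a(1) goodf_sig] by blast
qed

lemma new_notin: "new_wire I C L w \<Longrightarrow> {w} \<inter> ran L = {}"
  by (auto simp: new_wire_def)

lemma upd_agree: "L p = None \<Longrightarrow> \<forall>x\<in>dom L. (L(p \<mapsto> w)) x = L x"
  by auto

lemma sim_ff: "new_wire I C L w \<Longrightarrow> L p = None \<Longrightarrow> set (fvars (plug E Ff)) \<subseteq> dom L \<Longrightarrow>
  set (fvars (plug E (TFV p))) \<subseteq> dom (L(p \<mapsto> w)) \<and>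
  rbrel (readback (plug E Ff) I C L u) (readback (plug E (TFV p)) I C (L(p \<mapsto> w)) u)"
proof
  assume a: "new_wire I C L w" "L p = None" "set (fvars (plug E Ff)) \<subseteq> dom L"
  show "set (fvars (plug E (TFV p))) \<subseteq> dom (L(p \<mapsto> w))"
    by (rule fvars_plug_sub[OF a(3)]) auto
  have ag: "\<forall>x\<in>dom L. sig I C (L(p \<mapsto> w)) u x = sig I C L u x"
    by (rule sig_agree[OF upd_agree[of L p w, OF a(2)] _ new_notin[OF a(1)]]) auto
  have "sig I C (L(p \<mapsto> w)) u p = Ff" using new_wire_fresh[OF a(1)] by (simp add: sig_def bconst_def)
  then show "rbrel (readback (plug E Ff) I C L u) (readback (plug E (TFV p)) I C (L(p \<mapsto> w)) u)"
    unfolding rb_plug rbrel_def using ctx_agree[OF a(3) ag] by simp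
qed

lemma sim_tt: "new_wire I C L w \<Longrightarrow> L p = None \<Longrightarrow> set (fvars (plug E Tt)) \<subseteq> dom L \<Longrightarrow>
  set (fvars (plug E (TFV p))) \<subseteq> dom (L(p \<mapsto> w)) \<and>
  rbrel (readback (plug E Tt) I C L u) (readback (plug E (TFV p)) I (Cnot w [] # C) (L(p \<mapsto> w)) u)"
proof
  assume a: "new_wire I C L w" "L p = None" "set (fvars (plug E Tt)) \<subseteq> dom L"
  show "set (fvars (plug E (TFV p))) \<subseteq> dom (L(p \<mapsto> w))"
    by (rule fvars_plug_sub[OF a(3)]) auto
  have ag: "\<forall>x\<in>dom L. sig I (Cnot w [] # C) (L(p \<mapsto> w)) u x = sig I C L u x"
    by (rule sig_agree[OF upd_agree[of L p w, OF a(2)] _ new_notin[OF a(1)]]) (auto simp: run_cons)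
  have "sig I (Cnot w [] # C) (L(p \<mapsto> w)) u p = Tt" using new_wire_fresh[OF a(1)]
    by (simp add: sig_def bconst_def run_cons)
  then show "rbrel (readback (plug E Tt) I C L u) (readback (plug E (TFV p)) I (Cnot w [] # C) (L(p \<mapsto> w)) u)"
    unfolding rb_plug rbrel_def using ctx_agree[OF a(3) ag] by simp
qed

lemma sim_not: "new_wire I C L w \<Longrightarrow> L p = None \<Longrightarrow> L x = Some wx \<Longrightarrow>
  set (fvars (plug E (TApp TNot (TFV x)))) \<subseteq> dom L \<Longrightarrow>
  set (fvars (plug E (TFV p))) \<subseteq> dom (L(p \<mapsto> w)) \<and>
  rbrel (readback (plug E (TApp TNot (TFV x))) I C L u)
        (readback (plug E (TFV p)) I (Cnot w [(False, wx)] # C) (L(p \<mapsto> w)) u)"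
proof
  assume a: "new_wire I C L w" "L p = None" "L x = Some wx" "set (fvars (plug E (TApp TNot (TFV x)))) \<subseteq> dom L"
  show "set (fvars (plug E (TFV p))) \<subseteq> dom (L(p \<mapsto> w))"
    by (rule fvars_plug_sub[OF a(4)]) auto
  let ?C' = "Cnot w [(False, wx)] # C"
  have ag: "\<forall>x\<in>dom L. sig I ?C' (L(p \<mapsto> w)) u x = sig I C L u x"
    by (rule sig_agree[OF upd_agree[of L p w, OF a(2)] _ new_notin[OF a(1)]]) (auto simp: run_cons)
  have "sig I ?C' (L(p \<mapsto> w)) u p = bconst (\<not> run_circuit I C u wx)" using new_wire_fresh[OF a(1)]
    by (simp add: sig_def run_cons)
  moreover have "sig I C L u x = bconst (run_circuit I C u wx)" using a(3) by (simp add: sig_def)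
  ultimately show "rbrel (readback (plug E (TApp TNot (TFV x))) I C L u) (readback (plug E (TFV p)) I ?C' (L(p \<mapsto> w)) u)"
    unfolding rb_plug rbrel_def using ctx_agree[OF a(4) ag] bool_red.intros(3)[of "run_circuit I C u wx"]
    by auto
qed

lemma sim_and: "new_wire I C L w \<Longrightarrow> L p = None \<Longrightarrow> L x = Some wx \<Longrightarrow> L y = Some wy \<Longrightarrow>
  set (fvars (plug E (TApp TAnd (TPair (TFV x) (TFV y))))) \<subseteq> dom L \<Longrightarrow>
  set (fvars (plug E (TFV p))) \<subseteq> dom (L(p \<mapsto> w)) \<and>
  rbrel (readback (plug E (TApp TAnd (TPair (TFV x) (TFV y)))) I C L u)
        (readback (plug E (TFV p)) I (Cnot w [(True, wx), (True, wy)] # C) (L(p \<mapsto> w)) u)"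
proof
  assume a: "new_wire I C L w" "L p = None" "L x = Some wx" "L y = Some wy"
    "set (fvars (plug E (TApp TAnd (TPair (TFV x) (TFV y))))) \<subseteq> dom L"
  show "set (fvars (plug E (TFV p))) \<subseteq> dom (L(p \<mapsto> w))"
    by (rule fvars_plug_sub[OF a(5)]) auto
  let ?C' = "Cnot w [(True, wx), (True, wy)] # C"
  have ag: "\<forall>x\<in>dom L. sig I ?C' (L(p \<mapsto> w)) u x = sig I C L u x"
    by (rule sig_agree[OF upd_agree[of L p w, OF a(2)] _ new_notin[OF a(1)]]) (auto simp: run_cons)
  have "sig I ?C' (L(p \<mapsto> w)) u p = bconst (run_circuit I C u wx \<and> run_circuit I C u wy)"
    using new_wire_fresh[OF a(1)] by (simp add: sig_def run_cons)
  moreover have "sig I C L u x = bconst (run_circuit I C u wx)" "sig I C L u y = bconst (run_circuit I C u wy)"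
    using a(3,4) by (simp_all add: sig_def)
  ultimately show "rbrel (readback (plug E (TApp TAnd (TPair (TFV x) (TFV y)))) I C L u)
        (readback (plug E (TFV p)) I ?C' (L(p \<mapsto> w)) u)"
    unfolding rb_plug rbrel_def using ctx_agree[OF a(5) ag] bool_red.intros(4)[of "run_circuit I C u wx" "run_circuit I C u wy"]
    by auto
qed

lemma sim_xor: "new_wire I C L w \<Longrightarrow> L p = None \<Longrightarrow> L x = Some wx \<Longrightarrow> L y = Some wy \<Longrightarrow>
  set (fvars (plug E (TApp TXor (TPair (TFV x) (TFV y))))) \<subseteq> dom L \<Longrightarrow>
  set (fvars (plug E (TFV p))) \<subseteq> dom (L(p \<mapsto> w)) \<and>
  rbrel (readback (plug E (TApp TXor (TPair (TFV x) (TFV y)))) I C L u)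
        (readback (plug E (TFV p)) I (Cnot w [(True, wx)] # Cnot w [(True, wy)] # C) (L(p \<mapsto> w)) u)"
proof
  assume a: "new_wire I C L w" "L p = None" "L x = Some wx" "L y = Some wy"
    "set (fvars (plug E (TApp TXor (TPair (TFV x) (TFV y))))) \<subseteq> dom L"
  show "set (fvars (plug E (TFV p))) \<subseteq> dom (L(p \<mapsto> w))"
    by (rule fvars_plug_sub[OF a(5)]) auto
  let ?C' = "Cnot w [(True, wx)] # Cnot w [(True, wy)] # C"
  have wxw: "wx \<noteq> w" using a(1,3) by (auto simp: new_wire_def ran_def)
  have ag: "\<forall>x\<in>dom L. sig I ?C' (L(p \<mapsto> w)) u x = sig I C L u x"
    by (rule sig_agree[OF upd_agree[of L p w, OF a(2)] _ new_notin[OF a(1)]]) (auto simp: run_cons)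
  have "sig I ?C' (L(p \<mapsto> w)) u p = bconst (run_circuit I C u wx \<noteq> run_circuit I C u wy)"
  proof -
    have "(run_circuit I C u wy = (\<not> run_circuit I C u wx)) = (run_circuit I C u wx = (\<not> run_circuit I C u wy))"
      by blast
    then show ?thesis using new_wire_fresh[OF a(1)] wxw by (simp add: sig_def run_cons)
  qed
  moreover have "sig I C L u x = bconst (run_circuit I C u wx)" "sig I C L u y = bconst (run_circuit I C u wy)"
    using a(3,4) by (simp_all add: sig_def)
  ultimately show "rbrel (readback (plug E (TApp TXor (TPair (TFV x) (TFV y)))) I C L u)
        (readback (plug E (TFV p)) I ?C' (L(p \<mapsto> w)) u)"
    unfolding rb_plug rbrel_def using ctx_agree[OF a(5) ag] bool_red.intros(5)[of "run_circuit I C u wx" "run_circuit I C u wy"]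
    by auto
qed

lemma sim_err: "set (fvars (plug E (TIf (TFV p) V W))) \<subseteq> dom L \<Longrightarrow>
  set (fvars (plug E TErr)) \<subseteq> dom L \<and>
  rbrel (readback (plug E (TIf (TFV p) V W)) I C L u) (readback (plug E TErr) I C L u)"
proof
  assume a: "set (fvars (plug E (TIf (TFV p) V W))) \<subseteq> dom L"
  show "set (fvars (plug E TErr)) \<subseteq> dom L" by (rule fvars_plug_sub[OF a]) auto
  show "rbrel (readback (plug E (TIf (TFV p) V W)) I C L u) (readback (plug E TErr) I C L u)"
    unfolding rb_plug rbrel_def by auto
qed


lemma sim_if:
  assumes Lp: "L p = Some wp" and fV: "fo_ext L V" and fW: "fo_ext L W" and sVW: "same_shape V W"
    and sUV: "same_shape U V" and dU: "distinct (fvars U)" and Un: "\<forall>u\<in>set (fvars U). L u = None"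
    and lws: "length ws = length (fvars U)" and dws: "distinct ws" and nws: "\<forall>w\<in>set ws. new_wire I C L w"
    and fv: "set (fvars (plug E (TIf (TFV p) V W))) \<subseteq> dom L"
  shows "set (fvars (plug E U)) \<subseteq> dom (L ++ map_of (zip (fvars U) ws)) \<and>
    rbrel (readback (plug E (TIf (TFV p) V W)) I C L u)
      (readback (plug E U) I (if_gates wp (zip ws (zip (map (the \<circ> L) (fvars V)) (map (the \<circ> L) (fvars W)))) @ C)
         (L ++ map_of (zip (fvars U) ws)) u)"
proof
  let ?BV = "map (the \<circ> L) (fvars V)" and ?BW = "map (the \<circ> L) (fvars W)"
  let ?trs = "zip ws (zip ?BV ?BW)"
  let ?C' = "if_gates wp ?trs @ C" and ?L' = "L ++ map_of (zip (fvars U) ws)"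
  let ?v = "run_circuit I C u" and ?v' = "run_circuit I ?C' u"
  let ?s = "sig I C L u" and ?s' = "sig I ?C' ?L' u"
  have lUV: "length (fvars U) = length (fvars V)" using shape_len[OF sUV[unfolded same_shape_def]] .
  have lVW: "length (fvars V) = length (fvars W)" using shape_len[OF sVW[unfolded same_shape_def]] .
  have dV: "set (fvars V) \<subseteq> dom L" and dW: "set (fvars W) \<subseteq> dom L" using fV fW by (auto simp: fo_ext_def)
  have domL': "dom ?L' = dom L \<union> set (fvars U)" using lws by auto
  show "set (fvars (plug E U)) \<subseteq> dom ?L'"
    by (rule fvars_plug_sub[OF fv]) (use domL' in auto)
  have ranBV: "set ?BV \<subseteq> ran L"
  proof
    fix b assume "b \<in> set ?BV"
    then obtain x where x: "x \<in> set (fvars V)" "b = the (L x)" by auto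
    then obtain w where "L x = Some w" using dV by blast
    then show "b \<in> ran L" using x by (auto simp: ran_def)
  qed
  have ranBW: "set ?BW \<subseteq> ran L"
  proof
    fix b assume "b \<in> set ?BW"
    then obtain x where x: "x \<in> set (fvars W)" "b = the (L x)" by auto
    then obtain w where "L x = Some w" using dW by blast
    then show "b \<in> ran L" using x by (auto simp: ran_def)
  qed
  have wsran: "set ws \<inter> ran L = {}" using nws by (auto simp: new_wire_def)
  have wpran: "wp \<in> ran L" using Lp by (auto simp: ran_def)
  have mfst: "map fst ?trs = ws" using lws lUV lVW by simp
  have fstset: "fst ` set ?trs = set ws" using mfst by (metis set_map)
  have c1: "distinct (map fst ?trs)" using mfst dws by simp
  have c2: "wp \<notin> fst ` set ?trs" using fstset wsran wpran by auto
  have c3: "\<forall>(a, b, c) \<in> set ?trs. b \<notin> fst ` set ?trs \<and> c \<notin> fst ` set ?trs"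
  proof (intro ballI)
    fix t assume "t \<in> set ?trs"
    moreover obtain a b c where tt: "t = (a, b, c)" by (cases t) auto
    ultimately have t: "t = (a, b, c)" "(b, c) \<in> set (zip ?BV ?BW)" by (auto dest: set_zip_rightD)
    then have "b \<in> set ?BV" "c \<in> set ?BW" by (auto dest: set_zip_leftD set_zip_rightD)
    then show "case t of (a, b, c) \<Rightarrow> b \<notin> fst ` set ?trs \<and> c \<notin> fst ` set ?trs"
      using t ranBV ranBW wsran fstset by auto
  qed
  have v': "\<And>x. ?v' x = (case map_of ?trs x of Some (b, c) \<Rightarrow> (?v x \<noteq> (if ?v wp then ?v b else ?v c)) | None \<Rightarrow> ?v x)"
    unfolding run_append by (rule if_gates_run[OF c1 c2 c3])
  have other: "\<forall>y. y \<notin> set ws \<longrightarrow> ?v' y = ?v y"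
  proof (intro allI impI)
    fix y assume "y \<notin> set ws"
    then have "map_of ?trs y = None" using fstset by (simp add: map_of_eq_None_iff)
    then show "?v' y = ?v y" using v'[of y] by simp
  qed
  have Lag: "\<forall>x\<in>dom L. ?L' x = L x"
  proof
    fix x assume "x \<in> dom L"
    then have "x \<notin> set (fvars U)" using Un by auto
    then have "map_of (zip (fvars U) ws) x = None" using lws by simp
    then show "?L' x = L x" by (simp add: map_add_def)
  qed
  have ag: "\<forall>x\<in>dom L. ?s' x = ?s x" by (rule sig_agree[OF Lag other wsran])
  have ctx: "ctx_sfv ?s' E = ctx_sfv ?s E" by (rule ctx_agree[OF fv ag])
  have sU: "\<And>j. j < length (fvars U) \<Longrightarrow> ?s' (fvars U ! j) = bconst (if ?v wp then ?v (?BV ! j) else ?v (?BW ! j))"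
  proof -
    fix j assume j: "j < length (fvars U)"
    have "map_of (zip (fvars U) ws) (fvars U ! j) = Some (ws ! j)"
      using map_of_zip_nth[of "fvars U" ws j] lws dU j by simp
    then have L'j: "?L' (fvars U ! j) = Some (ws ! j)" by (simp add: map_add_def)
    have "map_of ?trs (ws ! j) = Some (zip ?BV ?BW ! j)"
      using map_of_zip_nth[of ws "zip ?BV ?BW" j] lws lUV lVW dws j by simp
    then have mj: "map_of ?trs (ws ! j) = Some (?BV ! j, ?BW ! j)" using j lUV lVW by simp
    have "ws ! j \<in> set ws" using j lws by simp
    then have "?v (ws ! j) = False" using nws new_wire_fresh by blast
    then have "?v' (ws ! j) = (if ?v wp then ?v (?BV ! j) else ?v (?BW ! j))" using v'[of "ws ! j"] mj by simp
    then show "?s' (fvars U ! j) = bconst (if ?v wp then ?v (?BV ! j) else ?v (?BW ! j))"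
      using L'j by (simp add: sig_def)
  qed
  have sV: "\<And>j. j < length (fvars V) \<Longrightarrow> ?s (fvars V ! j) = bconst (?v (?BV ! j))"
  proof -
    fix j assume j: "j < length (fvars V)"
    then have "fvars V ! j \<in> dom L" using dV nth_mem by blast
    then obtain w where "L (fvars V ! j) = Some w" by auto
    then show "?s (fvars V ! j) = bconst (?v (?BV ! j))" using j by (simp add: sig_def)
  qed
  have sW: "\<And>j. j < length (fvars W) \<Longrightarrow> ?s (fvars W ! j) = bconst (?v (?BW ! j))"
  proof -
    fix j assume j: "j < length (fvars W)"
    then have "fvars W ! j \<in> dom L" using dW nth_mem by blast
    then obtain w where "L (fvars W ! j) = Some w" by auto
    then show "?s (fvars W ! j) = bconst (?v (?BW ! j))" using j by (simp add: sig_def)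
  qed
  have sp: "?s p = bconst (?v wp)" using Lp by (simp add: sig_def)
  show "rbrel (readback (plug E (TIf (TFV p) V W)) I C L u) (readback (plug E U) I ?C' ?L' u)"
  proof (cases "?v wp")
    case True
    have "map ?s' (fvars U) = map ?s (fvars V)"
      by (rule nth_equalityI) (use lUV sU sV True in auto)
    then have e: "subst_fv ?s' U = subst_fv ?s V"
      using shape_sfv[OF sUV[unfolded same_shape_def]] by blast
    have "bool_red (TIf Tt (subst_fv ?s V) (subst_fv ?s W)) (subst_fv ?s V)" by (rule bool_red.intros)
    then show ?thesis unfolding rb_plug rbrel_def using ctx e sp True by (auto simp: bconst_def)
  next
    case False
    have m: "map ?s' (fvars U) = map ?s (fvars W)"
      by (rule nth_equalityI) (use lUV lVW sU sW False in auto)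
    have sh: "shape U = shape W" using sUV sVW by (simp add: same_shape_def)
    have e: "subst_fv ?s' U = subst_fv ?s W" by (rule shape_sfv[OF sh m])
    have "bool_red (TIf Ff (subst_fv ?s V) (subst_fv ?s W)) (subst_fv ?s W)" by (rule bool_red.intros)
    then show ?thesis unfolding rb_plug rbrel_def using ctx e sp False by (auto simp: bconst_def)
  qed
qed


lemma am_sim: "am_step s s' \<Longrightarrow> s = (t, (I, C), L) \<Longrightarrow> s' = (t', (I', C'), L') \<Longrightarrow> set (fvars t) \<subseteq> dom L \<Longrightarrow>
  I' = I \<and> set (fvars t') \<subseteq> dom L' \<and> rbrel (readback t I C L u) (readback t' I' C' L' u)"
proof (induct rule: am_step.induct)
  case (am_base R R' E RC L0)
  then show ?case using sim_base[of R R' E L I C u] by auto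
next
  case (am_ff I0 C0 L0 w p E)
  then show ?case using sim_ff[of I C L w p E u] by auto
next
  case (am_tt I0 C0 L0 w p E)
  then show ?case using sim_tt[of I C L w p E u] by auto
next
  case (am_not I0 C0 L0 w p x wx E)
  then show ?case using sim_not[of I C L w p x wx E u] by auto
next
  case (am_and I0 C0 L0 w p x wx y wy E)
  then show ?case using sim_and[of I C L w p x wx y wy E u] by auto
next
  case (am_xor I0 C0 L0 w p x wx y wy E)
  then show ?case using sim_xor[of I C L w p x wx y wy E u] by auto
next
  case (am_if L0 p wp V W U ws I0 C0 E)
  then show ?case using sim_if[of L p wp V W U ws I C E u] by auto
next
  case (am_err L0 p V W E RC)
  then show ?case using sim_err[of E p V W L I C u] by auto
qed

definition L0 :: "nat \<Rightarrow> nat \<Rightarrow> nat option" where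
  "L0 n = (\<lambda>x. if x \<in> {1..n} then Some x else None)"

lemma reach: "am_step\<^sup>*\<^sup>* (EmptyAM n M) s \<Longrightarrow> set (fvars M) \<subseteq> {1..n} \<Longrightarrow>
  (case s of (t, (I, C), L) \<Rightarrow> I = {1..n} \<and> set (fvars t) \<subseteq> dom L \<and>
     (\<exists>r. step\<^sup>*\<^sup>* (readback M {1..n} [] (L0 n) u) r \<and> approx (readback t I C L u) r))"
proof (induct rule: rtranclp_induct)
  case base
  have "dom (L0 n) = {1..n}" by (auto simp: L0_def split: if_splits)
  then show ?case using base by (auto simp: EmptyAM_def L0_def)
next
  case (step s1 s2)
  obtain t I C L where s1: "s1 = (t, (I, C), L)" by (cases s1) auto
  obtain t' I' C' L' where s2: "s2 = (t', (I', C'), L')" by (cases s2) auto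
  from step(3) s1 have inv: "I = {1..n}" "set (fvars t) \<subseteq> dom L"
    "\<exists>r. step\<^sup>*\<^sup>* (readback M {1..n} [] (L0 n) u) r \<and> approx (readback t I C L u) r" using step(4) by auto
  have sim: "I' = I \<and> set (fvars t') \<subseteq> dom L' \<and> rbrel (readback t I C L u) (readback t' I' C' L' u)"
    by (rule am_sim[OF step(2) s1 s2 inv(2)])
  from inv(3) obtain r where r: "step\<^sup>*\<^sup>* (readback M {1..n} [] (L0 n) u) r" "approx (readback t I C L u) r" by blast
  obtain r' where "step\<^sup>*\<^sup>* r r'" "approx (readback t' I' C' L' u) r'"
    using rbrel_sim sim r(2) by blast
  then show ?case using s2 sim inv r(1) by (auto intro: rtranclp_trans)
qed

lemma typing_fvars: "typing D G M T \<Longrightarrow> set (fvars M) \<subseteq> dom D"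
  by (induct rule: typing.induct) auto

lemma sfv_tuple: "subst_fv f (tuple xs) = tuple (map (subst_fv f) xs)"
  by (induct xs rule: tuple.induct) auto

lemma readback_init: "set (fvars M) \<subseteq> {1..n} \<Longrightarrow>
  readback M {1..n} [] (L0 n) u = subst_fv (\<lambda>x. if 1 \<le> x \<and> x \<le> n then bconst (map u [1..<Suc n] ! (x - 1)) else TFV x) M"
  unfolding readback_sig
proof (rule sfv_cong, intro ballI)
  fix x assume "x \<in> set (fvars M)" "set (fvars M) \<subseteq> {1..n}"
  then have x: "1 \<le> x" "x \<le> n" by auto
  then have "map u [1..<Suc n] ! (x - 1) = u x" by (simp del: upt_Suc)
  then show "sig {1..n} [] (L0 n) u x = (if 1 \<le> x \<and> x \<le> n then bconst (map u [1..<Suc n] ! (x - 1)) else TFV x)"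
    using x by (simp add: sig_def L0_def run_circuit_def)
qed


lemma fvars_tuple_TFV: "set (fvars (tuple (map TFV ps))) = set ps"
  by (induct ps rule: induct_list012) auto

theorem theorem4:
  fixes M :: trm and n m :: nat and ps :: "nat list"
    and I :: "nat set" and C :: "gate list" and L :: "nat \<Rightarrow> nat option"
  assumes "typing (bit_ctx n) [] M (bitpow m)"
    and "am_step\<^sup>*\<^sup>* (EmptyAM n M) (tuple (map TFV ps), (I, C), L)"
  shows "length ps = m \<and>
    (\<forall>(u :: nat \<Rightarrow> bool) (cs :: bool list). length cs = m \<longrightarrow>
       (readback (tuple (map TFV ps)) I C L u = tuple (map bconst cs)
        \<longleftrightarrow> step\<^sup>*\<^sup>* (let_tuple n (map u [1..<Suc n]) M) (tuple (map bconst cs))))"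
proof -
  have "dom (bit_ctx n) = {1..n}" by (auto simp: bit_ctx_def split: if_splits)
  then have fvM: "set (fvars M) \<subseteq> {1..n}" using typing_fvars[OF assms(1)] by simp
  define f where "f u = (\<lambda>x. if 1 \<le> x \<and> x \<le> n then bconst (map u [1..<Suc n] ! (x - 1)) else TFV x)" for u
  define vals where "vals u = map (\<lambda>p. run_circuit I C u (the (L p))) ps" for u
  have key: "step\<^sup>*\<^sup>* (let_tuple n (map u [1..<Suc n]) M) (subst_fv (f u) M) \<and>
     step\<^sup>*\<^sup>* (subst_fv (f u) M) (tuple (map bconst (vals u))) \<and>
     readback (tuple (map TFV ps)) I C L u = tuple (map bconst (vals u))" for u
  proof -
    have r: "I = {1..n}" "set (fvars (tuple (map TFV ps))) \<subseteq> dom L"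
      "\<exists>r. step\<^sup>*\<^sup>* (readback M {1..n} [] (L0 n) u) r \<and> approx (readback (tuple (map TFV ps)) I C L u) r"
      using reach[OF assms(2) fvM, of u] by auto
    have psL: "set ps \<subseteq> dom L" using r(2) fvars_tuple_TFV by simp
    have rb: "readback (tuple (map TFV ps)) I C L u = tuple (map bconst (vals u))"
      unfolding readback_sig sfv_tuple vals_def
    proof -
      have "map (subst_fv (sig I C L u)) (map TFV ps) = map bconst (map (\<lambda>p. run_circuit I C u (the (L p))) ps)"
        using psL by (auto simp: sig_def)
      then show "tuple (map (subst_fv (sig I C L u)) (map TFV ps)) = tuple (map bconst (map (\<lambda>p. run_circuit I C u (the (L p))) ps))"
        by (rule arg_cong[of _ _ tuple])
    qed
    from r(3) obtain r0 where r0: "step\<^sup>*\<^sup>* (readback M {1..n} [] (L0 n) u) r0"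
      "approx (readback (tuple (map TFV ps)) I C L u) r0" by blast
    have "r0 = tuple (map bconst (vals u))" using approx_nf[OF r0(2)] rb nf_val_tuple_bconst by simp
    moreover have "readback M {1..n} [] (L0 n) u = subst_fv (f u) M"
      using readback_init[OF fvM] by (simp add: f_def)
    moreover have "0 \<notin> set (fvars M)" using fvM by auto
    ultimately show ?thesis using r0(1) rb let_tuple_steps[of "map u [1..<Suc n]" n M] by (simp add: f_def)
  qed
  have len: "length ps = m"
  proof -
    let ?u = "\<lambda>_::nat. False"
    have "typ2 (bit_ctx n) [] (subst_fv (f ?u) M) (bitpow m)"
      by (rule typing_sfv[OF assms(1)]) (auto simp: bit_ctx_def f_def split: if_splits)
    then have "typ2 (bit_ctx n) [] (tuple (map bconst (vals ?u))) (bitpow m)"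
      using typ2_steps key by blast
    then have "bitpow m = bitpow (length (vals ?u))" by (rule typ2_tuple)
    then show ?thesis using bitpow_inj by (simp add: vals_def)
  qed
  have iff: "readback (tuple (map TFV ps)) I C L u = tuple (map bconst cs)
        \<longleftrightarrow> step\<^sup>*\<^sup>* (let_tuple n (map u [1..<Suc n]) M) (tuple (map bconst cs))" for u cs
  proof
    assume "readback (tuple (map TFV ps)) I C L u = tuple (map bconst cs)"
    then show "step\<^sup>*\<^sup>* (let_tuple n (map u [1..<Suc n]) M) (tuple (map bconst cs))"
      using key[of u] by (metis rtranclp_trans)
  next
    assume a: "step\<^sup>*\<^sup>* (let_tuple n (map u [1..<Suc n]) M) (tuple (map bconst cs))"
    have b: "step\<^sup>*\<^sup>* (let_tuple n (map u [1..<Suc n]) M) (tuple (map bconst (vals u)))"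
      using key[of u] by (metis rtranclp_trans)
    obtain d where d: "step\<^sup>*\<^sup>* (tuple (map bconst cs)) d" "step\<^sup>*\<^sup>* (tuple (map bconst (vals u))) d"
      using step_confl[OF a b] by blast
    have "d = tuple (map bconst cs)" using nf_val_steps[OF d(1) nf_val_tuple_bconst] .
    moreover have "d = tuple (map bconst (vals u))" using nf_val_steps[OF d(2) nf_val_tuple_bconst] .
    ultimately show "readback (tuple (map TFV ps)) I C L u = tuple (map bconst cs)" using key[of u] by simp
  qed
  show ?thesis using len iff by blast
qed


end
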